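(* Fix $r\ge5$. For every integer $k\ge0$, the number $t(k)$ of (labelled) $k$-TWGs for a given edge $e$ with vertex set equal to a given set of size $(r-2)k+2$ containing the endpoints of $e$ satisfies \[ t(k)=\frac{((r-2)k)!}{(r-2)!^{k}}\,\mathrm{FC}_{\binom r2-2}(k), \] where $\mathrm{FC}_d(k)=\frac{1}{dk+1}\binom{(d+1)k}{k}$ is the Fuss--Catalan number.
   Context: Tree witness graphs (TWGs) are defined recursively: a graph $T$ is a TWG for the edge $e$ if either $T=e$ (the single edge with its two endpoints), or there is a copy $H$ of $K_r$ with $e\in E(H)$ and, for each $f\in E(H)\setminus\{e\}$, a TWG $T_f$ for $f$, such that $T_f$ and $T_{f'}$ are vertex disjoint outside $V(H)$ for all $f\ne f'$, and $T=\bigcup_{f\in E(H)\setminus\{e\}}T_f$ ($H$ is called the root and the $T_f$ the primal branches). The order $\vartheta(T)$ is $0$ if $T$ is a single edge and otherwise $1+\sum_f\vartheta(T_f)$; a $k$-TWG is a TWG of order $k$. *)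

theory Defs
  imports Complex_Main
begin

text \<open>Graphs are represented by their edge sets (edges are 2-element vertex sets);
  the vertex set of a TWG is the union of its edges (a TWG has no isolated vertices).\<close>

definition clique_edges :: "'a set \<Rightarrow> 'a set set" where
  "clique_edges H = {f. f \<subseteq> H \<and> card f = 2}"

inductive twg :: "nat \<Rightarrow> 'a set \<Rightarrow> 'a set set \<Rightarrow> nat \<Rightarrow> bool" for r :: nat where
  base: "card e = 2 \<Longrightarrow> twg r e {e} 0"
| step: "\<lbrakk> finite H; card H = r; e \<in> clique_edges H;
           \<forall>f \<in> clique_edges H - {e}. twg r f (Tb f) (kb f);
           \<forall>f \<in> clique_edges H - {e}. \<forall>f' \<in> clique_edges H - {e}.
              f \<noteq> f' \<longrightarrow> \<Union>(Tb f) \<inter> \<Union>(Tb f') \<subseteq> H \<rbrakk>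
         \<Longrightarrow> twg r e (\<Union>f \<in> clique_edges H - {e}. Tb f)
                    (1 + (\<Sum>f \<in> clique_edges H - {e}. kb f))"

definition fuss_catalan :: "nat \<Rightarrow> nat \<Rightarrow> real" where
  "fuss_catalan d k = (1 / real (d * k + 1)) * real (((d + 1) * k) choose k)"

end

theory Submission
  imports Defs
begin

lemma arith_FF: "(X::nat) * N = p*b+(p+m)*a \<Longrightarrow> n*b + n*a = (N+1)*a \<Longrightarrow> N = m*n+p \<Longrightarrow> N \<ge> 1 \<Longrightarrow> n \<ge> 1 \<Longrightarrow> N*n*(X*(N+1)) = N*n*((p+1)*(a+b))"
proof -
  assume h1: "(X::nat) * N = p*b+(p+m)*a" and hE: "n*b + n*a = (N+1)*a" and hN: "N = m*n+p"
  have h1i: "int X * int N = int p * int b + (int p + int m) * int a" using arg_cong[OF h1, of int] by simp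
  have "int N * int n * (int X * (int N+1)) = int n * (int N + 1) * (int X * int N)" by (simp add: algebra_simps)
  also have "\<dots> = int n * (int N + 1) * (int p * int b + (int p + int m) * int a)" using h1i by simp
  also have "\<dots> = (int N + 1) * (int p * (int n * int b) + (int p + int m) * int n * int a)" by (simp add: algebra_simps)
  also have "int n * int b = (int N + 1) * int a - int n * int a" using arg_cong[OF hE, of int] by (simp add: algebra_simps)
  also have "(int N + 1) * (int p * ((int N + 1) * int a - int n * int a) + (int p + int m) * int n * int a) = (int N+1) * int a * (int p * int N + int p + int m * int n)"
    by (simp add: algebra_simps)
  also have "int p * int N + int p + int m * int n = (int p + 1) * int N" using hN by (simp add: algebra_simps)
  also have "(int N+1) * int a * ((int p + 1) * int N) = int N * ((int p + 1) * ((int N + 1) * int a))" by (simp add: algebra_simps)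
  also have "(int N + 1) * int a = int n * int b + int n * int a" using arg_cong[OF hE, of int] by (simp add: algebra_simps)
  finally have "int (N*n*(X*(N+1))) = int (N*n*((p+1)*(a+b)))" by (simp add: algebra_simps)
  then show ?thesis by (simp only: of_nat_eq_iff)
qed

fun FF :: "nat \<Rightarrow> nat \<Rightarrow> nat \<Rightarrow> nat" where
  "FF m 0 n = (if n = 0 then 1 else 0)"
| "FF m (Suc p) 0 = 1"
| "FF m (Suc p) (Suc n) = FF m p (Suc n) + FF m (p + m) n"

lemma FF_p0[simp]: "FF m p 0 = 1"
  by (cases p) auto

lemma FF_conv: "FF m (p + q) n = (\<Sum>i\<le>n. FF m p i * FF m q (n - i))"
proof (induction n arbitrary: p q rule: less_induct)
  case (less n)
  show ?case
  proof (induction p)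
    case 0
    have "(\<Sum>i\<le>n. FF m 0 i * FF m q (n - i)) = (\<Sum>i\<le>n. if i = 0 then FF m q (n - i) else 0)"
      by (intro sum.cong) auto
    then show ?case by simp
  next
    case (Suc p)
    show ?case
    proof (cases n)
      case 0
      then show ?thesis by simp
    next
      case (Suc n')
      have ih2: "FF m (p + m + q) n' = (\<Sum>i\<le>n'. FF m (p + m) i * FF m q (n' - i))"
        using less.IH[of n' "p + m" q] Suc by simp
      have "FF m (Suc p + q) n = FF m (p + q) (Suc n') + FF m (p + q + m) n'"
        using Suc by simp
      also have "\<dots> = (\<Sum>i\<le>Suc n'. FF m p i * FF m q (Suc n' - i))
                    + (\<Sum>i\<le>n'. FF m (p + m) i * FF m q (n' - i))"
        using Suc.IH \<open>n = Suc n'\<close> ih2 by (simp add: ac_simps)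
      also have "\<dots> = FF m q (Suc n') + (\<Sum>i\<le>n'. FF m p (Suc i) * FF m q (n' - i))
                    + (\<Sum>i\<le>n'. FF m (p + m) i * FF m q (n' - i))"
        by (subst sum.atMost_Suc_shift) simp
      also have "\<dots> = FF m q (Suc n') + (\<Sum>i\<le>n'. FF m (Suc p) (Suc i) * FF m q (n' - i))"
        by (simp add: sum.distrib[symmetric] algebra_simps)
      also have "\<dots> = (\<Sum>i\<le>Suc n'. FF m (Suc p) i * FF m q (Suc n' - i))"
        using sum.atMost_Suc_shift[of "\<lambda>i. FF m (Suc p) i * FF m q (Suc n' - i)" n'] by (simp del: FF.simps)
      finally show ?thesis using Suc by simp
    qed
  qed
qed

lemma FF_closed: "m \<ge> 1 \<Longrightarrow> p \<ge> 1 \<Longrightarrow> FF m p n * (m * n + p) = p * ((m * n + p) choose n)"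
proof (induction n arbitrary: p rule: less_induct)
  case (less n)
  show ?case
  proof (cases n)
    case 0 then show ?thesis using less.prems by simp
  next
    case (Suc n')
    show ?thesis using less.prems(2)
    proof (induction p rule: dec_induct)
      case base
      define N where "N = m * (Suc n')"
      have ih: "FF m m n' * (m * n' + m) = m * ((m * n' + m) choose n')"
        using less.IH[of n' m] Suc less.prems by simp
      have N: "m * n' + m = N" unfolding N_def by simp
      have "m * (FF m m n' * Suc n') = m * (N choose n')"
        using ih unfolding N by (simp add: N_def algebra_simps)
      hence a: "FF m m n' * Suc n' = (N choose n')" using less.prems(1) by simp
      have b: "((Suc N) choose (Suc n')) * Suc n' = Suc N * (N choose n')"
        using Suc_times_binomial_eq[of N n'] by (simp add: mult.commute)
      have "FF m 1 n * (m * n + 1) * Suc n' = FF m m n' * Suc n' * Suc N"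
        using Suc by (simp add: N_def algebra_simps)
      also have "\<dots> = ((Suc N) choose (Suc n')) * Suc n'" using a b by simp
      finally have "(FF m 1 n * (m * n + 1)) * Suc n' = ((Suc N) choose (Suc n')) * Suc n'" .
      hence "FF m 1 n * (m * n + 1) = ((Suc N) choose (Suc n'))" by (simp only: mult_right_cancel)
      then show ?case using Suc by (simp add: N_def)
    next
      case (step p)
      define N where "N = m * n + p"
      have ih1: "FF m p n * N = p * (N choose n)"
        using step.IH N_def by simp
      have ih2: "FF m (p + m) n' * N = (p + m) * (N choose n')"
        using less.IH[of n' "p + m"] Suc less.prems step.hyps by (simp add: N_def algebra_simps)
      have rec: "FF m (Suc p) n = FF m p n + FF m (p + m) n'"
        using Suc by simp
      have N1: "N \<ge> 1" using step.hyps N_def by simp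
      define a where "a = (N choose n')"
      define b where "b = (N choose n)"
      have E: "n * b + n * a = (N + 1) * a"
        using Suc_times_binomial[of n' N] binomial_Suc_Suc[of N n'] Suc
        unfolding a_def b_def by (simp add: algebra_simps)
      have X: "FF m (Suc p) n * N = p * b + (p + m) * a"
        using rec ih1 ih2 unfolding a_def b_def by (simp add: algebra_simps)
      have NN: "N = m * n + p" by (simp add: N_def)
      have "N * n * (FF m (Suc p) n * (N + 1)) = N * n * ((p + 1) * (a + b))"
        by (rule arith_FF[OF X E NN N1]) (simp add: Suc)
      hence "FF m (Suc p) n * (N + 1) = (p + 1) * (a + b)" using N1 Suc by simp
      moreover have "(Suc N choose n) = a + b" using binomial_Suc_Suc[of N n'] Suc unfolding a_def b_def by simp
      ultimately show ?case by (simp add: N_def)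
    qed
  qed
qed

lemma ce_iff: "f \<in> clique_edges H \<longleftrightarrow> f \<subseteq> H \<and> card f = 2"
  by (simp add: clique_edges_def)

lemma ce_pair: "a \<in> H \<Longrightarrow> b \<in> H \<Longrightarrow> a \<noteq> b \<Longrightarrow> {a, b} \<in> clique_edges H"
  by (simp add: ce_iff)

lemma ce_finite: "finite H \<Longrightarrow> finite (clique_edges H)"
  unfolding clique_edges_def by (rule finite_subset[of _ "Pow H"]) auto

lemma card2_sub_eq: "card g = 2 \<Longrightarrow> card f = 2 \<Longrightarrow> g \<subseteq> f \<Longrightarrow> g = f"
  by (metis card.infinite card_subset_eq zero_neq_numeral)

lemma card2_diff: "card g = 2 \<Longrightarrow> card f = 2 \<Longrightarrow> g \<noteq> f \<Longrightarrow> \<exists>a\<in>g. a \<notin> f"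
  using card2_sub_eq by blast

lemma cdiff: "finite U \<Longrightarrow> f \<subseteq> U \<Longrightarrow> card (U - f) = card U - card f"
  using card_Diff_subset finite_subset by blast

lemma rs_arith: "5 \<le> r \<Longrightarrow> (r - 2) * (1 + S) + 2 = r + (r - 2) * (S::nat)"
  by (simp add: distrib_left)

lemma twg0: "twg r e T 0 \<Longrightarrow> T = {e}"
  by (cases rule: twg.cases) auto

lemma vertex_in_edge:
  assumes "finite H" "card H \<ge> 3" "e \<in> clique_edges H" "x \<in> H"
  shows "\<exists>f \<in> clique_edges H - {e}. x \<in> f"
proof -
  obtain u w where e: "e = {u, w}" "u \<noteq> w" using assms(3) by (auto simp: ce_iff card_2_iff)
  have "card (H - e) \<ge> 1" using assms e by (simp add: card_Diff_subset ce_iff)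
  then obtain y where y: "y \<in> H" "y \<notin> e" by (metis Diff_iff card_0_eq not_one_le_zero ex_in_conv assms(1) finite_Diff)
  show ?thesis
  proof (cases "x \<in> e")
    case True
    then have "x \<noteq> y" using y by auto
    then show ?thesis using y assms(4) True by (intro bexI[of _ "{x, y}"]) (auto simp: ce_iff)
  next
    case False
    then have "x \<noteq> u" "u \<in> H" using e assms(3) by (auto simp: ce_iff)
    then show ?thesis using assms(4) False e by (intro bexI[of _ "{x, u}"]) (auto simp: ce_iff)
  qed
qed

context
  fixes r :: nat
  assumes r5: "5 \<le> r"
begin

lemma twg_basic:
  "twg r e T k \<Longrightarrow> card e = 2 \<and> finite T \<and> (\<forall>g\<in>T. card g = 2) \<and> e \<subseteq> \<Union>T \<and> finite (\<Union>T)
     \<and> card (\<Union>T) \<le> (r - 2) * k + 2"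
proof (induction rule: twg.induct)
  case (base e)
  then show ?case by (auto intro: card_ge_0_finite)
next
  case (step H e Tb kb)
  let ?I = "clique_edges H - {e}"
  have fI: "finite ?I" using step.hyps(1) ce_finite by blast
  have ce: "card e = 2" using step.hyps(3) by (simp add: ce_iff)
  have IHf: "finite (\<Union>(Tb f)) \<and> f \<subseteq> \<Union>(Tb f) \<and> card (\<Union>(Tb f)) \<le> (r - 2) * kb f + 2 \<and> card f = 2
     \<and> finite (Tb f) \<and> (\<forall>g\<in>Tb f. card g = 2)" if "f \<in> ?I" for f
    using step.IH that by blast
  have fU: "\<forall>f\<in>?I. finite (\<Union>(Tb f)) \<and> f \<subseteq> \<Union>(Tb f)" using IHf by blast
  have sub: "(\<Union>(\<Union>f\<in>?I. Tb f)) \<subseteq> H \<union> (\<Union>f\<in>?I. \<Union>(Tb f) - f)"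
  proof
    fix x assume "x \<in> \<Union>(\<Union>f\<in>?I. Tb f)"
    then obtain f where f: "f \<in> ?I" "x \<in> \<Union>(Tb f)" by blast
    then have "f \<subseteq> H" by (simp add: ce_iff)
    then show "x \<in> H \<union> (\<Union>f\<in>?I. \<Union>(Tb f) - f)" using f by (cases "x \<in> H") auto
  qed
  have "card (\<Union>(\<Union>f\<in>?I. Tb f)) \<le> card (H \<union> (\<Union>f\<in>?I. \<Union>(Tb f) - f))"
  proof (rule card_mono[OF _ sub])
    have "finite (\<Union>f\<in>?I. \<Union>(Tb f) - f)" by (rule finite_UN_I[OF fI]) (use fU in blast)
    then show "finite (H \<union> (\<Union>f\<in>?I. \<Union>(Tb f) - f))" using step.hyps(1) by blast
  qed
  also have "\<dots> \<le> card H + card (\<Union>f\<in>?I. \<Union>(Tb f) - f)" by (rule card_Un_le)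
  finally have c1: "card (\<Union>(\<Union>f\<in>?I. Tb f)) \<le> card H + card (\<Union>f\<in>?I. \<Union>(Tb f) - f)" .
  have "card (\<Union>f\<in>?I. \<Union>(Tb f) - f) \<le> (\<Sum>f\<in>?I. card (\<Union>(Tb f) - f))" by (rule card_UN_le[OF fI])
  also have "\<dots> \<le> (\<Sum>f\<in>?I. (r - 2) * kb f)"
  proof (rule sum_mono)
    fix f assume f: "f \<in> ?I"
    have "card (\<Union>(Tb f) - f) = card (\<Union>(Tb f)) - card f" using fU f cdiff[of "\<Union>(Tb f)" f] by blast
    also have "\<dots> \<le> (r - 2) * kb f" using IHf[OF f] by linarith
    finally show "card (\<Union>(Tb f) - f) \<le> (r - 2) * kb f" .
  qed
  also have "\<dots> = (r - 2) * sum kb ?I" by (simp add: sum_distrib_left)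
  finally have c2: "card (\<Union>f\<in>?I. \<Union>(Tb f) - f) \<le> (r - 2) * sum kb ?I" .
  have c: "card (\<Union>(\<Union>f\<in>?I. Tb f)) \<le> (r - 2) * (1 + sum kb ?I) + 2"
    using c1 c2 step.hyps(2) rs_arith[OF r5, of "sum kb ?I"] by linarith
  have eU: "e \<subseteq> \<Union>(\<Union>f\<in>?I. Tb f)"
  proof
    fix x assume "x \<in> e"
    then have "x \<in> H" using step.hyps(3) by (auto simp: ce_iff)
    then obtain f where "f \<in> ?I" "x \<in> f" using vertex_in_edge[OF step.hyps(1) _ step.hyps(3)] step.hyps(2) r5 by auto
    then show "x \<in> \<Union>(\<Union>f\<in>?I. Tb f)" using fU by blast
  qed
  have fT: "finite (\<Union>f\<in>?I. Tb f)" by (rule finite_UN_I[OF fI]) (use IHf in blast)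
  have "finite (\<Union>(\<Union>f\<in>?I. Tb f))"
  proof (rule finite_Union[OF fT])
    fix M assume "M \<in> (\<Union>f\<in>?I. Tb f)"
    then show "finite M" using IHf by (metis UN_E card_eq_0_iff zero_neq_numeral)
  qed
  moreover note fT
  moreover have "\<forall>g\<in>(\<Union>f\<in>?I. Tb f). card g = 2" using IHf by blast
  ultimately show ?case using c eU ce by blast
qed

lemma H_sub_U:
  assumes "finite H" "card H = r" "e \<in> clique_edges H" "\<forall>f\<in>clique_edges H - {e}. f \<subseteq> \<Union>(Tb f)"
  shows "H \<subseteq> \<Union>(\<Union>f\<in>clique_edges H - {e}. Tb f)"
proof
  fix x assume "x \<in> H"
  then obtain f where "f \<in> clique_edges H - {e}" "x \<in> f" using vertex_in_edge[OF assms(1) _ assms(3)] assms(2) r5 by auto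
  then show "x \<in> \<Union>(\<Union>f\<in>clique_edges H - {e}. Tb f)" using assms(4) by blast
qed

lemma tight_step:
  assumes H: "finite H" "card H = r" "e \<in> clique_edges H"
    and br: "\<forall>f\<in>clique_edges H - {e}. twg r f (Tb f) (kb f)"
    and dj: "\<forall>f\<in>clique_edges H - {e}. \<forall>f'\<in>clique_edges H - {e}. f \<noteq> f' \<longrightarrow> \<Union>(Tb f) \<inter> \<Union>(Tb f') \<subseteq> H"
    and tt: "card (\<Union>(\<Union>f\<in>clique_edges H - {e}. Tb f)) = (r - 2) * (1 + sum kb (clique_edges H - {e})) + 2"
  shows "\<forall>f\<in>clique_edges H - {e}. card (\<Union>(Tb f)) = (r - 2) * kb f + 2 \<and> \<Union>(Tb f) \<inter> H = f"
proof -
  let ?I = "clique_edges H - {e}"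
  have fI: "finite ?I" using H(1) ce_finite by blast
  have bas: "\<forall>f\<in>?I. finite (\<Union>(Tb f)) \<and> f \<subseteq> \<Union>(Tb f) \<and> card (\<Union>(Tb f)) \<le> (r - 2) * kb f + 2 \<and> card f = 2"
  proof
    fix f assume f: "f \<in> ?I"
    show "finite (\<Union>(Tb f)) \<and> f \<subseteq> \<Union>(Tb f) \<and> card (\<Union>(Tb f)) \<le> (r - 2) * kb f + 2 \<and> card f = 2"
      using twg_basic[OF br[rule_format, OF f]] by blast
  qed
  have HU: "H \<subseteq> \<Union>(\<Union>f\<in>?I. Tb f)" using H_sub_U[OF H] bas by blast
  have eq: "\<Union>(\<Union>f\<in>?I. Tb f) = H \<union> (\<Union>f\<in>?I. \<Union>(Tb f) - H)" using HU by blast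
  have "card (\<Union>(\<Union>f\<in>?I. Tb f)) = card H + card (\<Union>f\<in>?I. \<Union>(Tb f) - H)"
  proof -
    have fin2: "finite (\<Union>f\<in>?I. \<Union>(Tb f) - H)" by (rule finite_UN_I[OF fI]) (use bas in blast)
    have dis: "H \<inter> (\<Union>f\<in>?I. \<Union>(Tb f) - H) = {}" by blast
    show ?thesis unfolding eq by (rule card_Un_disjoint[OF H(1) fin2 dis])
  qed
  also have "card (\<Union>f\<in>?I. \<Union>(Tb f) - H) = (\<Sum>f\<in>?I. card (\<Union>(Tb f) - H))"
  proof -
    have d1: "\<forall>i\<in>?I. \<forall>j\<in>?I. i \<noteq> j \<longrightarrow> (\<Union>(Tb i) - H) \<inter> (\<Union>(Tb j) - H) = {}"
      using dj by blast
    have f1: "\<forall>i\<in>?I. finite (\<Union>(Tb i) - H)" using bas by blast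
    show ?thesis by (rule card_UN_disjoint[OF fI, of "\<lambda>f. \<Union>(Tb f) - H"]) (use d1 f1 in blast)+
  qed
  finally have s1: "(\<Sum>f\<in>?I. card (\<Union>(Tb f) - H)) = (\<Sum>f\<in>?I. (r - 2) * kb f)"
    using tt H(2) rs_arith[OF r5, of "sum kb ?I"] by (simp add: sum_distrib_left)
  have le: "card (\<Union>(Tb f) - H) \<le> (r - 2) * kb f" if f: "f \<in> ?I" for f
  proof -
    have fH: "f \<subseteq> H" using f by (simp add: ce_iff)
    have b: "finite (\<Union>(Tb f))" "f \<subseteq> \<Union>(Tb f)" "card (\<Union>(Tb f)) \<le> (r - 2) * kb f + 2" "card f = 2"
      using bas f by blast+
    have "card (\<Union>(Tb f) - H) \<le> card (\<Union>(Tb f) - f)" using b(1) fH by (intro card_mono) auto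
    also have "\<dots> = card (\<Union>(Tb f)) - 2" using b cdiff[of "\<Union>(Tb f)" f] by simp
    finally show ?thesis using b by linarith
  qed
  show ?thesis
  proof
    fix f assume f: "f \<in> ?I"
    have e1: "card (\<Union>(Tb f) - H) = (r - 2) * kb f" using sum_mono_inv[OF s1 le f fI] by simp
    have fH: "f \<subseteq> H" using f by (simp add: ce_iff)
    have b: "finite (\<Union>(Tb f))" "f \<subseteq> \<Union>(Tb f)" "card (\<Union>(Tb f)) \<le> (r - 2) * kb f + 2" "card f = 2"
      using bas f by blast+
    have c2: "card (\<Union>(Tb f) - f) = card (\<Union>(Tb f)) - 2" using b cdiff[of "\<Union>(Tb f)" f] by simp
    have sb: "\<Union>(Tb f) - H \<subseteq> \<Union>(Tb f) - f" using fH by blast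
    have le2: "card (\<Union>(Tb f) - H) \<le> card (\<Union>(Tb f) - f)" using b(1) sb by (intro card_mono) auto
    have "card f \<le> card (\<Union>(Tb f))" using b by (intro card_mono)
    then have A: "card (\<Union>(Tb f)) = (r - 2) * kb f + 2" using e1 c2 b le2 by linarith
    have "card (\<Union>(Tb f) - H) = card (\<Union>(Tb f) - f)" using A e1 c2 by simp
    then have "\<Union>(Tb f) - H = \<Union>(Tb f) - f"
      using card_subset_eq[OF _ sb] b(1) by blast
    then have "\<Union>(Tb f) \<inter> H = f" using fH b(2) by blast
    then show "card (\<Union>(Tb f)) = (r - 2) * kb f + 2 \<and> \<Union>(Tb f) \<inter> H = f" using A by blast
  qed
qed

end

definition reach :: "'a set set \<Rightarrow> 'a set \<Rightarrow> 'a \<Rightarrow> 'a \<Rightarrow> bool" where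
  "reach T X = (\<lambda>x y. {x, y} \<in> T \<and> x \<notin> X \<and> y \<notin> X)\<^sup>*\<^sup>*"

lemma reach_refl: "reach T X a a"
  unfolding reach_def by simp

lemma reach_edge: "reach T X a b \<Longrightarrow> {b, c} \<in> T \<Longrightarrow> b \<notin> X \<Longrightarrow> c \<notin> X \<Longrightarrow> reach T X a c"
  unfolding reach_def by (rule rtranclp.rtrancl_into_rtrancl) auto

lemma reach_trans: "reach T X a b \<Longrightarrow> reach T X b c \<Longrightarrow> reach T X a c"
  unfolding reach_def by (rule rtranclp_trans)

lemma reach_sym: "reach T X a b \<Longrightarrow> reach T X b a"
  unfolding reach_def
proof (induction rule: rtranclp_induct)
  case base then show ?case by simp
next
  case (step y z)
  then have "{z, y} \<in> T \<and> z \<notin> X \<and> y \<notin> X" by (simp add: insert_commute)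
  then show ?case using step.IH by (rule converse_rtranclp_into_rtranclp)
qed

lemma reach_mono:
  assumes "reach T0 X0 a b" "T0 \<subseteq> T1" "\<forall>v\<in>\<Union>T0. v \<notin> X0 \<longrightarrow> v \<notin> X1"
  shows "reach T1 X1 a b"
  using assms(1) unfolding reach_def
proof (induction rule: rtranclp_induct)
  case base then show ?case by simp
next
  case (step y z)
  have h: "{y, z} \<in> T1 \<and> y \<notin> X1 \<and> z \<notin> X1" using step.hyps(2) assms(2,3) by blast
  show ?case using rtranclp.rtrancl_into_rtrancl[OF step.IH, of z] h by simp
qed

lemma reach_stay:
  assumes "reach T X a b" "a \<in> C" "\<And>x y. {x, y} \<in> T \<Longrightarrow> x \<in> C \<Longrightarrow> y \<notin> X \<Longrightarrow> y \<in> C"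
  shows "b \<in> C"
  using assms(1) unfolding reach_def
proof (induction rule: rtranclp_induct)
  case base then show ?case using assms(2) by simp
next
  case (step y z) then show ?case using assms(3) by blast
qed

lemma reach_notin: "reach T X a b \<Longrightarrow> a \<notin> X \<Longrightarrow> b \<notin> X"
  unfolding reach_def by (induction rule: rtranclp_induct) auto

lemma reach_in: "reach T X a b \<Longrightarrow> a \<in> \<Union>T \<Longrightarrow> b \<in> \<Union>T"
  unfolding reach_def by (induction rule: rtranclp_induct) auto

definition conn :: "'a set \<Rightarrow> 'a set set \<Rightarrow> bool" where
  "conn f T \<longleftrightarrow> (\<forall>x z. x \<in> \<Union>T - f \<longrightarrow> z \<in> f \<longrightarrow> (\<exists>y. reach T f x y \<and> {y, z} \<in> T))"

definition dec :: "nat \<Rightarrow> 'a set \<Rightarrow> 'a set \<Rightarrow> ('a set \<Rightarrow> 'a set set) \<Rightarrow> bool" where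
  "dec r e H Tb \<longleftrightarrow> finite H \<and> card H = r \<and> e \<in> clique_edges H \<and>
     (\<forall>g\<in>clique_edges H - {e}. \<Union>(Tb g) \<inter> H = g \<and> finite (\<Union>(Tb g)) \<and> (\<forall>h\<in>Tb g. card h = 2)
        \<and> conn g (Tb g) \<and> (\<Union>(Tb g) = g \<longrightarrow> Tb g = {g})) \<and>
     (\<forall>g\<in>clique_edges H - {e}. \<forall>g'\<in>clique_edges H - {e}. g \<noteq> g' \<longrightarrow> \<Union>(Tb g) \<inter> \<Union>(Tb g') \<subseteq> H)"

definition sepv :: "'a set set \<Rightarrow> 'a set \<Rightarrow> 'a \<Rightarrow> bool" where
  "sepv T e x \<longleftrightarrow> (\<exists>P. card P = 2 \<and> x \<notin> P \<and> (\<exists>z\<in>e - P. \<not> reach T P x z))"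

context
  fixes r :: nat
  assumes r5: "5 \<le> r"
begin

context
  fixes e H :: "'a set" and Tb :: "'a set \<Rightarrow> 'a set set"
  assumes D: "dec r e H Tb"
begin

abbreviation "II \<equiv> clique_edges H - {e}"
abbreviation "TT \<equiv> (\<Union>g\<in>II. Tb g)"

lemma D_H: "finite H" "card H = r" "e \<in> clique_edges H" "e \<subseteq> H" "card e = 2"
proof -
  show h: "finite H" "card H = r" "e \<in> clique_edges H" using D unfolding dec_def by blast+
  then show "e \<subseteq> H" "card e = 2" by (simp_all add: ce_iff)
qed

lemma D_g: assumes "g \<in> II"
  shows "\<Union>(Tb g) \<inter> H = g" "finite (\<Union>(Tb g))" "\<And>h. h \<in> Tb g \<Longrightarrow> card h = 2" "conn g (Tb g)"
    "\<Union>(Tb g) = g \<Longrightarrow> Tb g = {g}" "g \<subseteq> H" "card g = 2" "g \<subseteq> \<Union>(Tb g)" "g \<noteq> e"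
    "\<Union>(Tb g) - g = \<Union>(Tb g) - H"
proof -
  show a: "\<Union>(Tb g) \<inter> H = g" using D assms unfolding dec_def by blast
  show "finite (\<Union>(Tb g))" using D assms unfolding dec_def by blast
  show "\<And>h. h \<in> Tb g \<Longrightarrow> card h = 2" using D assms unfolding dec_def by blast
  show "conn g (Tb g)" using D assms unfolding dec_def by blast
  show "\<Union>(Tb g) = g \<Longrightarrow> Tb g = {g}" using D assms unfolding dec_def by blast
  show "g \<subseteq> H" "card g = 2" "g \<noteq> e" using assms by (auto simp: ce_iff)
  then show "g \<subseteq> \<Union>(Tb g)" using a by blast
  show "\<Union>(Tb g) - g = \<Union>(Tb g) - H" using a by blast
qed

lemma D_dj0: "\<forall>g\<in>II. \<forall>g'\<in>II. g \<noteq> g' \<longrightarrow> \<Union>(Tb g) \<inter> \<Union>(Tb g') \<subseteq> H"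
  using D[unfolded dec_def] by (elim conjE) assumption

lemma D_dj: "g \<in> II \<Longrightarrow> g' \<in> II \<Longrightarrow> g \<noteq> g' \<Longrightarrow> \<Union>(Tb g) \<inter> \<Union>(Tb g') \<subseteq> H"
  using D_dj0 by blast

lemma D_edge:
  assumes "{a, b} \<in> TT" "g \<in> II" "a \<in> \<Union>(Tb g) - H"
  shows "{a, b} \<in> Tb g" "b \<in> \<Union>(Tb g)"
proof -
  obtain h where h: "h \<in> II" "{a, b} \<in> Tb h" using assms(1) by blast
  then have "a \<in> \<Union>(Tb h)" by blast
  then have "h = g" using D_dj[OF h(1) assms(2)] assms(3) by blast
  then show "{a, b} \<in> Tb g" using h by simp
  then show "b \<in> \<Union>(Tb g)" by blast
qed

lemma D_stay:
  assumes "reach TT X a b" "g \<in> II" "g \<subseteq> X" "a \<in> \<Union>(Tb g) - H"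
  shows "b \<in> \<Union>(Tb g) - H"
proof (rule reach_stay[OF assms(1) assms(4)])
  fix x y assume xy: "{x, y} \<in> TT" "x \<in> \<Union>(Tb g) - H" "y \<notin> X"
  then have "y \<in> \<Union>(Tb g)" using D_edge[OF xy(1) assms(2)] by blast
  then show "y \<in> \<Union>(Tb g) - H" using xy(3) assms(3) D_g(1)[OF assms(2)] by blast
qed

lemma D_link_end:
  assumes g: "g \<in> II" "g = {a, z}" "a \<noteq> z" and P: "a \<notin> P" "(\<Union>(Tb g) - H) \<inter> P = {}"
  shows "\<exists>y. reach TT P a y \<and> {y, z} \<in> TT \<and> y \<notin> P"
proof (cases "\<Union>(Tb g) = g")
  case True
  then have "Tb g = {g}" using D_g(5)[OF g(1)] by simp
  then have "g \<in> TT" using g(1) by (intro UN_I) auto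
  then have "{a, z} \<in> TT" using g(2) by simp
  moreover have "reach TT P a a" by (rule reach_refl)
  ultimately show ?thesis using P(1) by blast
next
  case False
  have gs: "g \<subseteq> \<Union>(Tb g)" by (rule D_g(8)[OF g(1)])
  then obtain c where c: "c \<in> \<Union>(Tb g) - g" using False by blast
  have cn: "conn g (Tb g)" using D_g(4)[OF g(1)] .
  have cz: "\<And>w. w \<in> g \<Longrightarrow> \<exists>y. reach (Tb g) g c y \<and> {y, w} \<in> Tb g"
    using cn c unfolding conn_def by blast
  have ag: "a \<in> g" "z \<in> g" using g(2) by simp_all
  obtain y1 where y1: "reach (Tb g) g c y1" "{y1, a} \<in> Tb g" using cz[OF ag(1)] by blast
  obtain y2 where y2: "reach (Tb g) g c y2" "{y2, z} \<in> Tb g" using cz[OF ag(2)] by blast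
  have sub: "Tb g \<subseteq> TT" using g(1) by blast
  have av: "\<forall>v\<in>\<Union>(Tb g). v \<notin> g \<longrightarrow> v \<notin> P"
  proof (intro ballI impI)
    fix v assume "v \<in> \<Union>(Tb g)" "v \<notin> g"
    then have "v \<in> \<Union>(Tb g) - H" using D_g(10)[OF g(1)] by blast
    then show "v \<notin> P" using P(2) by blast
  qed
  have r1: "reach TT P c y1" by (rule reach_mono[OF y1(1) sub av])
  have r2: "reach TT P c y2" by (rule reach_mono[OF y2(1) sub av])
  have cg: "c \<notin> g" using c by blast
  have y1g: "y1 \<notin> g" by (rule reach_notin[OF y1(1) cg])
  have y1i: "y1 \<in> \<Union>(Tb g)" using y1(2) by blast
  have y1P: "y1 \<notin> P" using av y1g y1i by blast
  have y2g: "y2 \<notin> g" by (rule reach_notin[OF y2(1) cg])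
  have y2i: "y2 \<in> \<Union>(Tb g)" using y2(2) by blast
  have y2P: "y2 \<notin> P" using av y2g y2i by blast
  have "{y1, a} \<in> TT" using y1(2) sub by blast
  then have "{a, y1} \<in> TT" by (simp add: insert_commute)
  then have "reach TT P a y1" by (rule reach_edge[OF reach_refl _ P(1) y1P])
  moreover have "reach TT P y1 c" by (rule reach_sym[OF r1])
  ultimately have "reach TT P a c" by (rule reach_trans)
  then have "reach TT P a y2" using r2 by (rule reach_trans)
  moreover have "{y2, z} \<in> TT" using y2(2) sub by blast
  ultimately show ?thesis using y2P by blast
qed

lemma D_link:
  assumes g: "g \<in> II" "g = {a, z}" "a \<noteq> z" and P: "a \<notin> P" "z \<notin> P" "(\<Union>(Tb g) - H) \<inter> P = {}"
  shows "reach TT P a z"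
proof -
  obtain y where y: "reach TT P a y" "{y, z} \<in> TT" "y \<notin> P" using D_link_end[OF g P(1) P(3)] by blast
  show ?thesis by (rule reach_edge[OF y(1) y(2) y(3) P(2)])
qed

lemma D_HU: "H \<subseteq> \<Union>TT"
  using H_sub_U[OF r5 D_H(1,2,3)] D_g(8) by blast

lemma D_conn: "conn e TT"
  unfolding conn_def
proof (intro allI impI)
  fix x z assume x: "x \<in> \<Union>TT - e" and z: "z \<in> e"
  have Hcase: "\<exists>y. reach TT e a y \<and> {y, z} \<in> TT" if a: "a \<in> H" "a \<notin> e" for a
  proof -
    have az: "a \<noteq> z" using a z by blast
    have zH: "z \<in> H" using z D_H(4) by blast
    have g: "{a, z} \<in> II" using ce_pair[OF a(1) zH az] a(2) z by auto
    have "(\<Union>(Tb {a, z}) - H) \<inter> e = {}" using D_H(4) by blast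
    then show ?thesis using D_link_end[OF g refl az a(2)] by blast
  qed
  show "\<exists>y. reach TT e x y \<and> {y, z} \<in> TT"
  proof (cases "x \<in> H")
    case True then show ?thesis using Hcase x by blast
  next
    case False
    then obtain g where g: "g \<in> II" "x \<in> \<Union>(Tb g)" using x by blast
    have xg: "x \<in> \<Union>(Tb g) - g" using g False D_g(6)[OF g(1)] by blast
    obtain a where a: "a \<in> g" "a \<notin> e" using card2_diff[OF D_g(7)[OF g(1)] D_H(5) D_g(9)[OF g(1)]] by blast
    obtain y where y: "reach (Tb g) g x y" "{y, a} \<in> Tb g" using D_g(4)[OF g(1)] xg a(1) unfolding conn_def by blast
    have sub: "Tb g \<subseteq> TT" using g(1) by blast
    have av: "\<forall>v\<in>\<Union>(Tb g). v \<notin> g \<longrightarrow> v \<notin> e" using D_g(1)[OF g(1)] D_H(4) by blast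
    have r1: "reach TT e x y" by (rule reach_mono[OF y(1) sub av])
    have yg: "y \<notin> g" using reach_notin[OF y(1)] xg by blast
    have ye: "y \<notin> e" using av yg y(2) by blast
    have r2: "reach TT e x a" using reach_edge[OF r1 _ ye a(2)] y(2) sub by blast
    have aH: "a \<in> H" using a(1) D_g(6)[OF g(1)] by blast
    obtain y' where "reach TT e a y'" "{y', z} \<in> TT" using Hcase[OF aH a(2)] by blast
    then show ?thesis using reach_trans[OF r2] by blast
  qed
qed

end
end

context
  fixes r :: nat
  assumes r5: "5 \<le> r"
begin

context
  fixes e H :: "'a set" and Tb :: "'a set \<Rightarrow> 'a set set"
  assumes D: "dec r e H Tb"
begin

abbreviation "II' \<equiv> clique_edges H - {e}"
abbreviation "TT' \<equiv> (\<Union>g\<in>II'. Tb g)"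

lemma D_Cdis: "g \<in> II' \<Longrightarrow> g' \<in> II' \<Longrightarrow> g \<noteq> g' \<Longrightarrow> (\<Union>(Tb g) - H) \<inter> (\<Union>(Tb g') - H) = {}"
  using D_dj[OF r5 D] by blast

lemma D_II: "a \<in> H \<Longrightarrow> b \<in> H \<Longrightarrow> a \<noteq> b \<Longrightarrow> a \<notin> e \<Longrightarrow> {a, b} \<in> II'"
  using ce_pair[of a H b] by auto

lemma D_II': "a \<in> H \<Longrightarrow> b \<in> H \<Longrightarrow> a \<noteq> b \<Longrightarrow> b \<notin> e \<Longrightarrow> {a, b} \<in> II'"
  using ce_pair[of a H b] by auto

lemma D_Hreach:
  assumes x: "x \<in> H" "x \<notin> e" and P: "card P = 2" "x \<notin> P" and z: "z \<in> e" "z \<notin> P"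
  shows "reach TT' P x z"
proof -
  define C where "C = (\<lambda>g. \<Union>(Tb g) - H)"
  have CH: "\<And>g. C g \<inter> H = {}" unfolding C_def by blast
  have Cdis: "\<And>g g'. g \<in> II' \<Longrightarrow> g' \<in> II' \<Longrightarrow> g \<noteq> g' \<Longrightarrow> C g \<inter> C g' = {}"
    unfolding C_def by (rule D_Cdis)
  have eH: "e \<subseteq> H" using D_H[OF r5 D] by blast
  have zH: "z \<in> H" using z eH by blast
  have xz: "x \<noteq> z" using x z by blast
  have gxz: "{x, z} \<in> II'" by (rule D_II[OF x(1) zH xz x(2)])
  show ?thesis
  proof (cases "C {x, z} \<inter> P = {}")
    case True
    then show ?thesis using D_link[OF r5 D gxz refl xz P(2) z(2)] unfolding C_def by blast
  next
    case False
    then obtain p0 where p0: "p0 \<in> C {x, z}" "p0 \<in> P" by blast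
    define Y where "Y = H - e - {x}"
    have cY: "card Y = r - 3"
    proof -
      have "card (H - e) = r - 2" using cdiff[of H e] D_H[OF r5 D] by simp
      moreover have "x \<in> H - e" using x by blast
      ultimately show ?thesis unfolding Y_def using D_H(1)[OF r5 D] by simp
    qed
    have fY: "finite Y" unfolding Y_def using D_H(1)[OF r5 D] by simp
    have YH: "\<And>y. y \<in> Y \<Longrightarrow> y \<in> H \<and> y \<notin> e \<and> y \<noteq> x \<and> y \<noteq> z" unfolding Y_def using z by blast
    define R where "R = (\<lambda>y. {y} \<union> C {x, y} \<union> C {y, z})"
    show ?thesis
    proof (cases "\<exists>y\<in>Y. R y \<inter> P = {}")
      case True
      then obtain y where y: "y \<in> Y" "R y \<inter> P = {}" by blast
      have yy: "y \<in> H" "y \<notin> e" "y \<noteq> x" "y \<noteq> z" using YH[OF y(1)] by auto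
      have g1: "{x, y} \<in> II'" by (rule D_II[OF x(1) yy(1) yy(3)[symmetric] x(2)])
      have g2: "{y, z} \<in> II'" by (rule D_II[OF yy(1) zH yy(4) yy(2)])
      have y2: "y \<notin> P" "C {x, y} \<inter> P = {}" "C {y, z} \<inter> P = {}" using y(2) unfolding R_def by blast+
      have "reach TT' P x y" by (rule D_link[OF r5 D g1 refl yy(3)[symmetric] P(2) y2(1)]) (use y2(2) in \<open>simp add: C_def\<close>)
      moreover have "reach TT' P y z" by (rule D_link[OF r5 D g2 refl yy(4) y2(1) z(2)]) (use y2(3) in \<open>simp add: C_def\<close>)
      ultimately show ?thesis by (rule reach_trans)
    next
      case False
      then have ne: "\<forall>y\<in>Y. \<exists>p. p \<in> R y \<inter> P" by blast
      define pk where "pk = (\<lambda>y. SOME p. p \<in> R y \<inter> P)"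
      have pk: "\<And>y. y \<in> Y \<Longrightarrow> pk y \<in> R y \<inter> P" unfolding pk_def using ne by (metis someI_ex)
      have Rdis: "R y \<inter> R y' = {}" if yy': "y \<in> Y" "y' \<in> Y" "y \<noteq> y'" for y y'
      proof -
        have a: "y \<in> H" "y \<notin> e" "y \<noteq> x" "y \<noteq> z" using YH[OF yy'(1)] by auto
        have b: "y' \<in> H" "y' \<notin> e" "y' \<noteq> x" "y' \<noteq> z" using YH[OF yy'(2)] by auto
        have g1: "{x, y} \<in> II'" "{y, z} \<in> II'" "{x, y'} \<in> II'" "{y', z} \<in> II'"
          using D_II[OF x(1) a(1) a(3)[symmetric] x(2)] D_II[OF a(1) zH a(4) a(2)]
            D_II[OF x(1) b(1) b(3)[symmetric] x(2)] D_II[OF b(1) zH b(4) b(2)] by auto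
        have n: "{x, y} \<noteq> {x, y'}" "{x, y} \<noteq> {y', z}" "{y, z} \<noteq> {x, y'}" "{y, z} \<noteq> {y', z}"
          using yy'(3) a b xz by (auto simp: doubleton_eq_iff)
        have "C {x, y} \<inter> C {x, y'} = {}" by (rule Cdis[OF g1(1) g1(3) n(1)])
        moreover have "C {x, y} \<inter> C {y', z} = {}" by (rule Cdis[OF g1(1) g1(4) n(2)])
        moreover have "C {y, z} \<inter> C {x, y'} = {}" by (rule Cdis[OF g1(2) g1(3) n(3)])
        moreover have "C {y, z} \<inter> C {y', z} = {}" by (rule Cdis[OF g1(2) g1(4) n(4)])
        moreover have "y \<notin> C g" "y' \<notin> C g" for g using CH a(1) b(1) by blast+
        ultimately show ?thesis using yy'(3) unfolding R_def by blast
      qed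
      have R0: "R y \<inter> C {x, z} = {}" if y: "y \<in> Y" for y
      proof -
        have a: "y \<in> H" "y \<notin> e" "y \<noteq> x" "y \<noteq> z" using YH[OF y] by auto
        have g1: "{x, y} \<in> II'" "{y, z} \<in> II'"
          using D_II[OF x(1) a(1) a(3)[symmetric] x(2)] D_II[OF a(1) zH a(4) a(2)] by auto
        have n: "{x, y} \<noteq> {x, z}" "{y, z} \<noteq> {x, z}"
          using a xz by (auto simp: doubleton_eq_iff)
        have "C {x, y} \<inter> C {x, z} = {}" by (rule Cdis[OF g1(1) gxz n(1)])
        moreover have "C {y, z} \<inter> C {x, z} = {}" by (rule Cdis[OF g1(2) gxz n(2)])
        moreover have "y \<notin> C g" for g using CH a(1) by blast
        ultimately show ?thesis unfolding R_def by blast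
      qed
      have inj: "inj_on pk Y"
      proof (rule inj_onI)
        fix y y' assume yy': "y \<in> Y" "y' \<in> Y" "pk y = pk y'"
        show "y = y'"
        proof (rule ccontr)
          assume "y \<noteq> y'"
          then have d: "R y \<inter> R y' = {}" using Rdis yy' by blast
          have "pk y \<in> R y" "pk y' \<in> R y'" using pk[OF yy'(1)] pk[OF yy'(2)] by simp_all
          then show False using d yy'(3) by (metis disjoint_iff)
        qed
      qed
      have sub: "pk ` Y \<subseteq> P - {p0}"
      proof
        fix q assume "q \<in> pk ` Y"
        then obtain y where y: "y \<in> Y" "q = pk y" by blast
        have "pk y \<in> R y" "pk y \<in> P" using pk[OF y(1)] by simp_all
        then show "q \<in> P - {p0}" using R0[OF y(1)] p0(1) y(2) by (metis Diff_iff disjoint_iff singletonD)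
      qed
      have fP: "finite P" using P(1) by (metis card.infinite zero_neq_numeral)
      have "card Y = card (pk ` Y)" using card_image[OF inj] by simp
      also have "\<dots> \<le> card (P - {p0})" using sub fP by (intro card_mono) auto
      also have "\<dots> = 1" using P(1) p0(2) fP by simp
      finally show ?thesis using cY r5 by simp
    qed
  qed
qed

lemma D_Hnsep: "x \<in> H \<Longrightarrow> x \<notin> e \<Longrightarrow> \<not> sepv TT' e x"
  unfolding sepv_def using D_Hreach by blast

lemma D_outsep:
  assumes x: "x \<in> \<Union>TT'" "x \<notin> H"
  shows "sepv TT' e x"
proof -
  obtain g where g: "g \<in> II'" "x \<in> \<Union>(Tb g)" using x(1) by blast
  have xg: "x \<in> \<Union>(Tb g) - H" using g x(2) by blast
  have gH: "g \<subseteq> H" using D_g(6)[OF r5 D g(1)] .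
  obtain z where z: "z \<in> e" "z \<notin> g"
    using card2_diff[OF D_H(5)[OF r5 D] D_g(7)[OF r5 D g(1)]] D_g(9)[OF r5 D g(1)] by metis
  have "\<not> reach TT' g x z"
  proof
    assume "reach TT' g x z"
    then have "z \<in> \<Union>(Tb g) - H" using D_stay[OF r5 D _ g(1) order_refl xg] by blast
    then show False using z(1) D_H(4)[OF r5 D] by blast
  qed
  moreover have "x \<notin> g" using xg gH by blast
  ultimately show ?thesis unfolding sepv_def using D_g(7)[OF r5 D g(1)] z by blast
qed

lemma D_Hchar: "H = e \<union> {x \<in> \<Union>TT'. x \<notin> e \<and> \<not> sepv TT' e x}"
proof
  show "H \<subseteq> e \<union> {x \<in> \<Union>TT'. x \<notin> e \<and> \<not> sepv TT' e x}"
    using D_HU[OF r5 D] D_Hnsep by blast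
  show "e \<union> {x \<in> \<Union>TT'. x \<notin> e \<and> \<not> sepv TT' e x} \<subseteq> H"
    using D_H(4)[OF r5 D] D_outsep by blast
qed

lemma D_branch_eq:
  assumes g: "g \<in> II'"
  shows "Tb g = {k \<in> TT'. k \<subseteq> \<Union>(Tb g)}"
proof
  show "Tb g \<subseteq> {k \<in> TT'. k \<subseteq> \<Union>(Tb g)}" using g by blast
  show "{k \<in> TT'. k \<subseteq> \<Union>(Tb g)} \<subseteq> Tb g"
  proof
    fix k assume k: "k \<in> {k \<in> TT'. k \<subseteq> \<Union>(Tb g)}"
    then obtain h where h: "h \<in> II'" "k \<in> Tb h" "k \<subseteq> \<Union>(Tb g)" by blast
    show "k \<in> Tb g"
    proof (cases "h = g")
      case True then show ?thesis using h by simp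
    next
      case False
      have kU: "k \<subseteq> \<Union>(Tb h)" using h(2) by blast
      have "k \<subseteq> H" using D_dj[OF r5 D h(1) g False] kU h(3) by blast
      then have kh: "k \<subseteq> h" and kg: "k \<subseteq> g" using kU h(3) D_g(1)[OF r5 D h(1)] D_g(1)[OF r5 D g] by blast+
      have ck: "card k = 2" by (rule D_g(3)[OF r5 D h(1) h(2)])
      have "k = h" by (rule card2_sub_eq[OF ck D_g(7)[OF r5 D h(1)] kh])
      moreover have "k = g" by (rule card2_sub_eq[OF ck D_g(7)[OF r5 D g] kg])
      ultimately show ?thesis using False by simp
    qed
  qed
qed

end

lemma dec_U_sub:
  assumes D1: "dec r e H Tb" and D2: "dec r e H Tb'"
    and TT: "(\<Union>g\<in>clique_edges H - {e}. Tb g) = (\<Union>g\<in>clique_edges H - {e}. Tb' g)"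
    and g: "g \<in> clique_edges H - {e}"
  shows "\<Union>(Tb g) \<subseteq> \<Union>(Tb' g)"
proof
  fix x assume x: "x \<in> \<Union>(Tb g)"
  show "x \<in> \<Union>(Tb' g)"
  proof (cases "x \<in> H")
    case True
    then have "x \<in> g" using x D_g(1)[OF r5 D1 g] by blast
    then show ?thesis using D_g(8)[OF r5 D2 g] by blast
  next
    case False
    have "x \<in> \<Union>(\<Union>g\<in>clique_edges H - {e}. Tb' g)" using x g TT[symmetric] by blast
    then obtain h where h: "h \<in> clique_edges H - {e}" "x \<in> \<Union>(Tb' h)" by blast
    have xh: "x \<in> \<Union>(Tb' h) - H" using h False by blast
    have xg: "x \<in> \<Union>(Tb g) - g" using x False D_g(6)[OF r5 D1 g] by blast
    have gh: "g \<subseteq> h"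
    proof
      fix z assume z: "z \<in> g"
      obtain y where y: "reach (Tb g) g x y" "{y, z} \<in> Tb g"
        using D_g(4)[OF r5 D1 g] xg z unfolding conn_def by blast
      have av: "\<forall>v\<in>\<Union>(Tb g). v \<notin> g \<longrightarrow> v \<notin> H" using D_g(1)[OF r5 D1 g] by blast
      have sub: "Tb g \<subseteq> (\<Union>g\<in>clique_edges H - {e}. Tb' g)" using g TT by blast
      have "reach (\<Union>g\<in>clique_edges H - {e}. Tb' g) H x y" by (rule reach_mono[OF y(1) sub av])
      then have yh: "y \<in> \<Union>(Tb' h) - H" using D_stay[OF r5 D2 _ h(1) D_g(6)[OF r5 D2 h(1)] xh] by blast
      have "{y, z} \<in> (\<Union>g\<in>clique_edges H - {e}. Tb' g)" using y(2) sub by blast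
      then have "z \<in> \<Union>(Tb' h)" using D_edge(2)[OF r5 D2 _ h(1) yh] by blast
      moreover have "z \<in> H" using z D_g(6)[OF r5 D1 g] by blast
      ultimately show "z \<in> h" using D_g(1)[OF r5 D2 h(1)] by blast
    qed
    have "g = h" by (rule card2_sub_eq[OF D_g(7)[OF r5 D1 g] D_g(7)[OF r5 D2 h(1)] gh])
    then show ?thesis using h by simp
  qed
qed

lemma dec_unique:
  assumes D1: "dec r e H Tb" and D2: "dec r e H' Tb'"
    and TT: "(\<Union>g\<in>clique_edges H - {e}. Tb g) = (\<Union>g\<in>clique_edges H' - {e}. Tb' g)"
  shows "H = H' \<and> (\<forall>g\<in>clique_edges H - {e}. Tb g = Tb' g)"
proof -
  have HH: "H = H'" using D_Hchar[OF D1] D_Hchar[OF D2] TT by simp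
  have "Tb g = Tb' g" if g: "g \<in> clique_edges H - {e}" for g
  proof -
    have D2': "dec r e H Tb'" using D2 HH by simp
    have TT': "(\<Union>g\<in>clique_edges H - {e}. Tb g) = (\<Union>g\<in>clique_edges H - {e}. Tb' g)" using TT HH by simp
    have "\<Union>(Tb g) = \<Union>(Tb' g)"
      using dec_U_sub[OF D1 D2' TT' g] dec_U_sub[OF D2' D1 TT'[symmetric] g] by blast
    then show ?thesis using D_branch_eq[OF D1 g] D_branch_eq[OF D2' g] TT' by simp
  qed
  then show ?thesis using HH by blast
qed

end

context
  fixes r :: nat
  assumes r5: "5 \<le> r"
begin

lemma tight0: "twg r g T j \<Longrightarrow> card (\<Union>T) = (r - 2) * j + 2 \<Longrightarrow> \<Union>T = g \<Longrightarrow> T = {g}"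
proof -
  assume t: "twg r g T j" "card (\<Union>T) = (r - 2) * j + 2" "\<Union>T = g"
  have "card g = 2" using twg_basic[OF r5 t(1)] by blast
  then have "(r - 2) * j = 0" using t by simp
  then have "j = 0" using r5 by simp
  then show "T = {g}" using twg0 t(1) by blast
qed

lemma mk_dec:
  assumes H: "finite H" "card H = r" "e \<in> clique_edges H"
    and br: "\<forall>f\<in>clique_edges H - {e}. twg r f (Tb f) (kb f)"
    and cn: "\<forall>f\<in>clique_edges H - {e}. card (\<Union>(Tb f)) = (r - 2) * kb f + 2 \<longrightarrow> conn f (Tb f)"
    and dj: "\<forall>f\<in>clique_edges H - {e}. \<forall>f'\<in>clique_edges H - {e}. f \<noteq> f' \<longrightarrow> \<Union>(Tb f) \<inter> \<Union>(Tb f') \<subseteq> H"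
    and tt: "card (\<Union>(\<Union>f\<in>clique_edges H - {e}. Tb f)) = (r - 2) * (1 + sum kb (clique_edges H - {e})) + 2"
  shows "dec r e H Tb \<and> (\<forall>f\<in>clique_edges H - {e}. card (\<Union>(Tb f)) = (r - 2) * kb f + 2)"
proof -
  have ts: "\<forall>f\<in>clique_edges H - {e}. card (\<Union>(Tb f)) = (r - 2) * kb f + 2 \<and> \<Union>(Tb f) \<inter> H = f"
    by (rule tight_step[OF r5 H br dj tt])
  have g: "\<Union>(Tb g) \<inter> H = g \<and> finite (\<Union>(Tb g)) \<and> (\<forall>h\<in>Tb g. card h = 2)
        \<and> conn g (Tb g) \<and> (\<Union>(Tb g) = g \<longrightarrow> Tb g = {g})" if g: "g \<in> clique_edges H - {e}" for g
  proof -
    have tw: "twg r g (Tb g) (kb g)" using br g by blast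
    have c: "card (\<Union>(Tb g)) = (r - 2) * kb g + 2" "\<Union>(Tb g) \<inter> H = g" using ts g by blast+
    have b: "finite (\<Union>(Tb g))" "\<forall>h\<in>Tb g. card h = 2" using twg_basic[OF r5 tw] by blast+
    have "conn g (Tb g)" using cn g c(1) by blast
    moreover have "\<Union>(Tb g) = g \<longrightarrow> Tb g = {g}" using tight0[OF tw c(1)] by blast
    ultimately show ?thesis using c b by blast
  qed
  have "dec r e H Tb" unfolding dec_def
  proof (intro conjI)
    show "finite H" "card H = r" "e \<in> clique_edges H" by (rule H(1), rule H(2), rule H(3))
    show "\<forall>g\<in>clique_edges H - {e}. \<Union>(Tb g) \<inter> H = g \<and> finite (\<Union>(Tb g)) \<and> (\<forall>h\<in>Tb g. card h = 2)
        \<and> conn g (Tb g) \<and> (\<Union>(Tb g) = g \<longrightarrow> Tb g = {g})" using g by blast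
    show "\<forall>f\<in>clique_edges H - {e}. \<forall>f'\<in>clique_edges H - {e}. f \<noteq> f' \<longrightarrow> \<Union>(Tb f) \<inter> \<Union>(Tb f') \<subseteq> H"
      by (rule dj)
  qed
  then show ?thesis using ts by blast
qed

lemma tight_conn: "twg r f T j \<Longrightarrow> card (\<Union>T) = (r - 2) * j + 2 \<longrightarrow> conn f T"
proof (induction rule: twg.induct)
  case (base e)
  then show ?case unfolding conn_def by auto
next
  case (step H e Tb kb)
  show ?case
  proof
    assume tt: "card (\<Union>(\<Union>f\<in>clique_edges H - {e}. Tb f)) = (r - 2) * (1 + sum kb (clique_edges H - {e})) + 2"
    have br: "\<forall>f\<in>clique_edges H - {e}. twg r f (Tb f) (kb f)" using step.IH by blast
    have cn: "\<forall>f\<in>clique_edges H - {e}. card (\<Union>(Tb f)) = (r - 2) * kb f + 2 \<longrightarrow> conn f (Tb f)"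
      using step.IH by blast
    have "dec r e H Tb" using mk_dec[OF step.hyps(1,2,3) br cn step.hyps(4) tt] by blast
    then show "conn e (\<Union>f\<in>clique_edges H - {e}. Tb f)" by (rule D_conn[OF r5])
  qed
qed

lemma tight_dec:
  assumes tw: "twg r e T k" and tt: "card (\<Union>T) = (r - 2) * k + 2" and k: "k \<ge> 1"
  shows "\<exists>H Tb kb. dec r e H Tb \<and> T = (\<Union>g\<in>clique_edges H - {e}. Tb g) \<and> k = 1 + sum kb (clique_edges H - {e})
     \<and> (\<forall>g\<in>clique_edges H - {e}. twg r g (Tb g) (kb g) \<and> card (\<Union>(Tb g)) = (r - 2) * kb g + 2)"
  using tw
proof (cases rule: twg.cases)
  case (base)
  then show ?thesis using k by simp
next
  case (step H Tb kb)
  have cn: "\<forall>f\<in>clique_edges H - {e}. card (\<Union>(Tb f)) = (r - 2) * kb f + 2 \<longrightarrow> conn f (Tb f)"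
    using step(6) tight_conn by blast
  have tt': "card (\<Union>(\<Union>f\<in>clique_edges H - {e}. Tb f)) = (r - 2) * (1 + sum kb (clique_edges H - {e})) + 2"
    using tt step(1,2) by simp
  have "dec r e H Tb \<and> (\<forall>f\<in>clique_edges H - {e}. card (\<Union>(Tb f)) = (r - 2) * kb f + 2)"
    by (rule mk_dec[OF step(3,4,5,6) cn step(7) tt'])
  then show ?thesis by (intro exI[of _ H] exI[of _ Tb] exI[of _ kb]) (use step in blast)
qed

end

definition famset :: "nat \<Rightarrow> 'a set set \<Rightarrow> 'a set \<Rightarrow> ('a set \<Rightarrow> 'a set set) set" where
  "famset r I W = {Tb. (\<forall>g. g \<notin> I \<longrightarrow> Tb g = {}) \<and>
     (\<forall>g\<in>I. (\<exists>j. twg r g (Tb g) j \<and> card (\<Union>(Tb g)) = (r - 2) * j + 2) \<and> \<Union>(Tb g) \<subseteq> g \<union> W) \<and>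
     (\<forall>g\<in>I. \<forall>g'\<in>I. g \<noteq> g' \<longrightarrow> (\<Union>(Tb g) - g) \<inter> (\<Union>(Tb g') - g') = {}) \<and>
     (\<Union>g\<in>I. \<Union>(Tb g) - g) = W}"

lemma famsetI:
  assumes "\<And>g. g \<notin> I \<Longrightarrow> Tb g = {}"
    and "\<And>g. g \<in> I \<Longrightarrow> (\<exists>j. twg r g (Tb g) j \<and> card (\<Union>(Tb g)) = (r - 2) * j + 2)"
    and "\<And>g. g \<in> I \<Longrightarrow> \<Union>(Tb g) \<subseteq> g \<union> W"
    and "\<And>g g'. g \<in> I \<Longrightarrow> g' \<in> I \<Longrightarrow> g \<noteq> g' \<Longrightarrow> (\<Union>(Tb g) - g) \<inter> (\<Union>(Tb g') - g') = {}"
    and "(\<Union>g\<in>I. \<Union>(Tb g) - g) = W"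
  shows "Tb \<in> famset r I W"
  using assms unfolding famset_def by simp

lemma famsetD:
  assumes "Tb \<in> famset r I W"
  shows "\<And>g. g \<notin> I \<Longrightarrow> Tb g = {}"
    and "\<And>g. g \<in> I \<Longrightarrow> (\<exists>j. twg r g (Tb g) j \<and> card (\<Union>(Tb g)) = (r - 2) * j + 2)"
    and "\<And>g. g \<in> I \<Longrightarrow> \<Union>(Tb g) \<subseteq> g \<union> W"
    and "\<And>g g'. g \<in> I \<Longrightarrow> g' \<in> I \<Longrightarrow> g \<noteq> g' \<Longrightarrow> (\<Union>(Tb g) - g) \<inter> (\<Union>(Tb g') - g') = {}"
    and "(\<Union>g\<in>I. \<Union>(Tb g) - g) = W"
  using assms unfolding famset_def by simp_all

lemma famset_empty: "famset r {} W \<subseteq> {\<lambda>_. {}}"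
proof
  fix Tb assume "Tb \<in> famset r {} W"
  then have "\<And>g. Tb g = {}" using famsetD(1) by blast
  then show "Tb \<in> {\<lambda>_. {}}" by auto
qed

lemma famset_empty2: "famset r {} {} = {\<lambda>_. {}}"
proof
  show "famset r {} {} \<subseteq> {\<lambda>_. {}}" by (rule famset_empty)
  show "{\<lambda>_. {}} \<subseteq> famset r {} {}" by (auto intro: famsetI)
qed

lemma famset_emptyW: "W \<noteq> {} \<Longrightarrow> famset r {} W = {}"
  using famsetD(5) by fastforce

lemma finite_A: "finite U \<Longrightarrow> finite {T. P T \<and> \<Union>T = U}"
proof -
  assume "finite U"
  then have "finite (Pow (Pow U))" by simp
  moreover have "{T. P T \<and> \<Union>T = U} \<subseteq> Pow (Pow U)" by blast
  ultimately show ?thesis by (rule finite_subset[rotated])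
qed

definition CH :: "nat \<Rightarrow> nat \<Rightarrow> nat \<Rightarrow> 'a itself \<Rightarrow> bool" where
  "CH r m n (_ :: 'a itself) \<longleftrightarrow> (\<forall>j\<le>n. \<forall>(f :: 'a set) U. card f = 2 \<longrightarrow> f \<subseteq> U \<longrightarrow> finite U \<longrightarrow> card U = (r - 2) * j + 2 \<longrightarrow>
     card {T. twg r f T j \<and> \<Union>T = U} * fact (r - 2) ^ j = fact ((r - 2) * j) * FF m 1 j)"

context
  fixes r :: nat
  assumes r5: "5 \<le> r"
begin

lemma fam_insert:
  assumes f: "f \<notin> I" "card f = 2" "f \<inter> W = {}" and fW: "finite W" and cW: "card W = (r - 2) * n"
  shows "famset r (insert f I) W =
    (\<Union>(j, S)\<in>Sigma {..n} (\<lambda>j. {S. S \<subseteq> W \<and> card S = (r - 2) * j}).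
       (\<lambda>(T, Tb). Tb(f := T)) ` ({T. twg r f T j \<and> \<Union>T = f \<union> S} \<times> famset r I (W - S)))"
proof (intro equalityI subsetI)
  fix Tb assume Tb: "Tb \<in> famset r (insert f I) W"
  note F = famsetD[OF Tb]
  obtain j where j: "twg r f (Tb f) j" "card (\<Union>(Tb f)) = (r - 2) * j + 2" using F(2)[of f] by blast
  define S where "S = \<Union>(Tb f) - f"
  have bf: "f \<subseteq> \<Union>(Tb f)" "finite (\<Union>(Tb f))" using twg_basic[OF r5 j(1)] by blast+
  have cS: "card S = (r - 2) * j" unfolding S_def using cdiff[OF bf(2) bf(1)] j(2) f(2) by simp
  have SW: "S \<subseteq> W" unfolding S_def using F(3)[of f] by blast
  have "(r - 2) * j \<le> (r - 2) * n" using card_mono[OF fW SW] cS cW by simp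
  then have jn: "j \<le> n" using r5 by simp
  have UT: "\<Union>(Tb f) = f \<union> S" unfolding S_def using bf by blast
  define Tb' where "Tb' = Tb(f := {})"
  have Tb': "Tb' \<in> famset r I (W - S)"
  proof (rule famsetI)
    fix g assume "g \<notin> I" then show "Tb' g = {}" unfolding Tb'_def using F(1)[of g] by auto
  next
    fix g assume g: "g \<in> I"
    then have gf: "g \<noteq> f" using f(1) by blast
    then have e: "Tb' g = Tb g" unfolding Tb'_def by simp
    show "\<exists>j. twg r g (Tb' g) j \<and> card (\<Union>(Tb' g)) = (r - 2) * j + 2" using F(2)[of g] g e by simp
    have "(\<Union>(Tb g) - g) \<inter> S = {}" unfolding S_def using F(4)[of g f] g gf by blast
    then show "\<Union>(Tb' g) \<subseteq> g \<union> (W - S)" using F(3)[of g] g e by blast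
  next
    fix g g' assume "g \<in> I" "g' \<in> I" "g \<noteq> g'"
    then show "(\<Union>(Tb' g) - g) \<inter> (\<Union>(Tb' g') - g') = {}" unfolding Tb'_def using F(4)[of g g'] f(1) by auto
  next
    define X where "X = (\<Union>g\<in>I. \<Union>(Tb g) - g)"
    have w: "W = S \<union> X" using F(5) unfolding S_def X_def by simp
    have dis: "S \<inter> X = {}" unfolding S_def X_def using F(4) f(1) by blast
    have wx: "W - S = X" unfolding w using dis by blast
    have "(\<Union>g\<in>I. \<Union>(Tb' g) - g) = (\<Union>g\<in>I. \<Union>(Tb g) - g)"
    proof (rule SUP_cong)
      fix g assume "g \<in> I" then show "\<Union>(Tb' g) - g = \<Union>(Tb g) - g" unfolding Tb'_def using f(1) by auto
    qed simp
    then show "(\<Union>g\<in>I. \<Union>(Tb' g) - g) = W - S" unfolding wx X_def .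
  qed
  have eq: "Tb = (\<lambda>(T, Tb). Tb(f := T)) (Tb f, Tb')" unfolding Tb'_def by simp
  have mem: "(Tb f, Tb') \<in> {T. twg r f T j \<and> \<Union>T = f \<union> S} \<times> famset r I (W - S)" using j(1) UT Tb' by simp
  have im: "Tb \<in> (\<lambda>(T, Tb). Tb(f := T)) ` ({T. twg r f T j \<and> \<Union>T = f \<union> S} \<times> famset r I (W - S))"
    by (rule image_eqI[of Tb "\<lambda>(T, Tb). Tb(f := T)" "(Tb f, Tb')", OF eq mem])
  have pm: "(j, S) \<in> Sigma {..n} (\<lambda>j. {S. S \<subseteq> W \<and> card S = (r - 2) * j})" using jn SW cS by simp
  show "Tb \<in> (\<Union>(j, S)\<in>Sigma {..n} (\<lambda>j. {S. S \<subseteq> W \<and> card S = (r - 2) * j}).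
       (\<lambda>(T, Tb). Tb(f := T)) ` ({T. twg r f T j \<and> \<Union>T = f \<union> S} \<times> famset r I (W - S)))"
    by (rule UN_I[OF pm]) (use im in simp)
next
  fix Tb assume "Tb \<in> (\<Union>(j, S)\<in>Sigma {..n} (\<lambda>j. {S. S \<subseteq> W \<and> card S = (r - 2) * j}).
       (\<lambda>(T, Tb). Tb(f := T)) ` ({T. twg r f T j \<and> \<Union>T = f \<union> S} \<times> famset r I (W - S)))"
  then obtain p where p: "p \<in> Sigma {..n} (\<lambda>j. {S. S \<subseteq> W \<and> card S = (r - 2) * j})"
    "Tb \<in> (case p of (j, S) \<Rightarrow> (\<lambda>(T, Tb). Tb(f := T)) ` ({T. twg r f T j \<and> \<Union>T = f \<union> S} \<times> famset r I (W - S)))"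
    by blast
  obtain j S where pjS: "p = (j, S)" by (cases p)
  have jS: "j \<le> n" "S \<subseteq> W" "card S = (r - 2) * j" using p(1) pjS by auto
  obtain x where x: "x \<in> {T. twg r f T j \<and> \<Union>T = f \<union> S} \<times> famset r I (W - S)" "Tb = (\<lambda>(T, Tb). Tb(f := T)) x"
    using p(2) pjS by auto
  obtain T Tb' where xT: "x = (T, Tb')" by (cases x)
  have T: "twg r f T j" "\<Union>T = f \<union> S" and Tb': "Tb' \<in> famset r I (W - S)" and Tb: "Tb = Tb'(f := T)"
    using x xT by auto
  note F = famsetD[OF Tb']
  have fS: "f \<inter> S = {}" using f(3) jS(2) by blast
  have fin: "finite f" using f(2) by (metis card.infinite zero_neq_numeral)
  have cfS: "card (f \<union> S) = (r - 2) * j + 2"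
    using card_Un_disjoint[OF fin finite_subset[OF jS(2) fW] fS] f(2) jS(3) by simp
  show "Tb \<in> famset r (insert f I) W"
  proof (rule famsetI)
    fix g assume "g \<notin> insert f I" then show "Tb g = {}" using Tb F(1)[of g] by auto
  next
    fix g assume g: "g \<in> insert f I"
    show "\<exists>j. twg r g (Tb g) j \<and> card (\<Union>(Tb g)) = (r - 2) * j + 2"
    proof (cases "g = f")
      case True then show ?thesis using Tb T cfS by auto
    next
      case False then show ?thesis using Tb F(2)[of g] g by auto
    qed
    show "\<Union>(Tb g) \<subseteq> g \<union> W"
    proof (cases "g = f")
      case True then show ?thesis using Tb T jS(2) by auto
    next
      case False then show ?thesis using Tb F(3)[of g] g by auto
    qed
  next
    fix g g' assume g: "g \<in> insert f I" "g' \<in> insert f I" "g \<noteq> g'"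
    have Sf: "\<Union>(Tb f) - f = S" using Tb T(2) fS by auto
    have Sg: "\<Union>(Tb h) - h \<subseteq> W - S" if h: "h \<in> I" for h
    proof -
      have "h \<noteq> f" using h f(1) by blast
      then have "Tb h = Tb' h" using Tb by simp
      moreover have "\<Union>(Tb' h) - h \<subseteq> (\<Union>g\<in>I. \<Union>(Tb' g) - g)" using h by blast
      ultimately show ?thesis using F(5) by simp
    qed
    show "(\<Union>(Tb g) - g) \<inter> (\<Union>(Tb g') - g') = {}"
    proof (cases "g = f")
      case True
      then have "g' \<in> I" using g by blast
      then show ?thesis using Sf Sg True by blast
    next
      case False
      then have gI: "g \<in> I" using g by blast
      show ?thesis
      proof (cases "g' = f")
        case True then show ?thesis using Sf Sg[OF gI] by blast
      next
        case False
        then have "g' \<in> I" using g by blast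
        then show ?thesis using F(4)[OF gI _ g(3)] Tb \<open>g \<noteq> f\<close> False by simp
      qed
    qed
  next
    have Sf: "\<Union>(Tb f) - f = S" using Tb T(2) fS by auto
    have "(\<Union>g\<in>I. \<Union>(Tb g) - g) = (\<Union>g\<in>I. \<Union>(Tb' g) - g)"
    proof (rule SUP_cong)
      fix g assume "g \<in> I" then show "\<Union>(Tb g) - g = \<Union>(Tb' g) - g" using Tb f(1) by auto
    qed simp
    then have "(\<Union>g\<in>I. \<Union>(Tb g) - g) = W - S" using F(5) by simp
    then have "(\<Union>g\<in>insert f I. \<Union>(Tb g) - g) = S \<union> (W - S)" using Sf by simp
    then show "(\<Union>g\<in>insert f I. \<Union>(Tb g) - g) = W" using jS(2) by blast
  qed
qed

lemma CH_mono: "CH r m n TYPE('a) \<Longrightarrow> n' \<le> n \<Longrightarrow> CH r m n' TYPE('a)"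
  unfolding CH_def by auto

lemma CH_use: "CH r m n TYPE('a) \<Longrightarrow> j \<le> n \<Longrightarrow> card (f::'a set) = 2 \<Longrightarrow> f \<subseteq> U \<Longrightarrow> finite U
  \<Longrightarrow> card U = (r - 2) * j + 2 \<Longrightarrow> card {T. twg r f T j \<and> \<Union>T = U} * fact (r - 2) ^ j = fact ((r - 2) * j) * FF m 1 j"
  unfolding CH_def by blast

lemma fam_count:
  fixes I :: "'a set set" and W :: "'a set"
  assumes "finite I"
  shows "(\<forall>g\<in>I. card g = 2 \<and> g \<inter> W = {}) \<Longrightarrow> finite W \<Longrightarrow> card W = (r - 2) * n \<Longrightarrow> CH r m n TYPE('a)
    \<Longrightarrow> finite (famset r I W) \<and> card (famset r I W) * fact (r - 2) ^ n = fact ((r - 2) * n) * FF m (card I) n"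
  using assms
proof (induction I arbitrary: W n rule: finite_induct)
  case empty
  show ?case
  proof (cases "W = {}")
    case True
    then have "n = 0" using empty.prems(3) r5 by simp
    then show ?thesis using True by (simp add: famset_empty2)
  next
    case False
    then have "card W > 0" using empty.prems(2) by (simp add: card_gt_0_iff)
    then have "n \<noteq> 0" using empty.prems(3) by (cases n) auto
    then show ?thesis using False by (simp add: famset_emptyW)
  qed
next
  case (insert f I)
  let ?s = "r - 2"
  define B where "B = (\<lambda>j. {S. S \<subseteq> W \<and> card S = ?s * j})"
  define A where "A = (\<lambda>j S. {T. twg r f T j \<and> \<Union>T = f \<union> S})"
  define phi where "phi = (\<lambda>(T :: 'a set set, Tb :: 'a set \<Rightarrow> 'a set set). Tb(f := T))"
  define img where "img = (\<lambda>(j, S). phi ` (A j S \<times> famset r I (W - S)))"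
  have fc: "card f = 2" "f \<inter> W = {}" using insert.prems(1) by auto
  have fin_f: "finite f" using fc(1) by (metis card.infinite zero_neq_numeral)
  have fW: "finite W" by (rule insert.prems(2))
  have eqset: "famset r (insert f I) W = (\<Union>p\<in>Sigma {..n} B. img p)"
    unfolding B_def img_def phi_def A_def
    by (rule fam_insert[OF insert.hyps(2) fc fW insert.prems(3)])
  have fP: "finite (Sigma {..n} B)" unfolding B_def using fW by (intro finite_SigmaI) auto
  have per: "finite (img (j, S)) \<and> card (img (j, S)) * fact ?s ^ n = fact (?s * j) * FF m 1 j * (fact (?s * (n - j)) * FF m (card I) (n - j))"
    if p: "(j, S) \<in> Sigma {..n} B" for j S
  proof -
    have jS: "j \<le> n" "S \<subseteq> W" "card S = ?s * j" using p unfolding B_def by auto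
    have fS: "f \<inter> S = {}" using fc(2) jS(2) by blast
    have finS: "finite S" using finite_subset[OF jS(2) fW] .
    have cU: "card (f \<union> S) = ?s * j + 2" using card_Un_disjoint[OF fin_f finS fS] fc(1) jS(3) by simp
    have a: "card (A j S) * fact ?s ^ j = fact (?s * j) * FF m 1 j"
      unfolding A_def by (rule CH_use[OF insert.prems(4) jS(1) fc(1) _ _ cU]) (use fin_f finS in auto)
    have fa: "finite (A j S)" unfolding A_def using fin_f finS by (intro finite_A) auto
    have cWS: "card (W - S) = ?s * (n - j)"
      using card_Diff_subset[OF finS jS(2)] insert.prems(3) jS(3) by (simp add: diff_mult_distrib2)
    have ih: "finite (famset r I (W - S)) \<and> card (famset r I (W - S)) * fact ?s ^ (n - j) = fact (?s * (n - j)) * FF m (card I) (n - j)"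
      using insert.IH[of "W - S" "n - j"] insert.prems(1) fW cWS CH_mono[OF insert.prems(4), of "n - j"] by auto
    have inj: "inj_on phi (A j S \<times> famset r I (W - S))"
    proof (rule inj_onI)
      fix x y assume x: "x \<in> A j S \<times> famset r I (W - S)" and y: "y \<in> A j S \<times> famset r I (W - S)" and e: "phi x = phi y"
      obtain T1 Tb1 where x1: "x = (T1, Tb1)" by (cases x)
      obtain T2 Tb2 where y1: "y = (T2, Tb2)" by (cases y)
      have m: "Tb1 \<in> famset r I (W - S)" "Tb2 \<in> famset r I (W - S)" using x y x1 y1 by auto
      have "Tb1 f = {}" "Tb2 f = {}" using famsetD(1)[OF m(1) insert.hyps(2)] famsetD(1)[OF m(2) insert.hyps(2)] by auto
      moreover have "Tb1(f := T1) = Tb2(f := T2)" using e x1 y1 unfolding phi_def by simp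
      ultimately have "T1 = T2 \<and> Tb1 = Tb2" by (metis fun_upd_idem_iff fun_upd_same fun_upd_upd)
      then show "x = y" using x1 y1 by simp
    qed
    have ci: "card (img (j, S)) = card (A j S) * card (famset r I (W - S))"
      unfolding img_def using card_image[OF inj] by (simp add: card_cartesian_product)
    have fi: "finite (img (j, S))" unfolding img_def using fa ih by simp
    have pw: "fact ?s ^ n = (fact ?s ^ j :: nat) * fact ?s ^ (n - j)" using jS(1) by (simp add: power_add[symmetric])
    have "card (img (j, S)) * fact ?s ^ n = (card (A j S) * fact ?s ^ j) * (card (famset r I (W - S)) * fact ?s ^ (n - j))"
      unfolding ci pw by (simp add: ac_simps)
    also have "\<dots> = fact (?s * j) * FF m 1 j * (fact (?s * (n - j)) * FF m (card I) (n - j))" using a ih by simp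
    finally show ?thesis using fi by simp
  qed
  have memS: "\<Union>(Tb f) - f = S" if "Tb \<in> img (j, S)" "(j, S) \<in> Sigma {..n} B" for Tb j S
  proof -
    have SW: "S \<subseteq> W" using that(2) unfolding B_def by simp
    have "Tb \<in> phi ` (A j S \<times> famset r I (W - S))" using that(1) unfolding img_def by simp
    then obtain x where x: "x \<in> A j S \<times> famset r I (W - S)" "Tb = phi x" by blast
    obtain T Tb' where xT: "x = (T, Tb')" by (cases x)
    have "T \<in> A j S" "Tb = Tb'(f := T)" using x xT unfolding phi_def by auto
    then show ?thesis using fc(2) SW unfolding A_def by auto
  qed
  have disj: "\<forall>p\<in>Sigma {..n} B. \<forall>q\<in>Sigma {..n} B. p \<noteq> q \<longrightarrow> img p \<inter> img q = {}"
  proof (intro ballI impI)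
    fix p q assume p: "p \<in> Sigma {..n} B" and q: "q \<in> Sigma {..n} B" and pq: "p \<noteq> q"
    obtain j S where pj: "p = (j, S)" by (cases p)
    obtain j' S' where qj: "q = (j', S')" by (cases q)
    show "img p \<inter> img q = {}"
    proof (rule ccontr)
      assume "img p \<inter> img q \<noteq> {}"
      then obtain Tb where "Tb \<in> img (j, S)" "Tb \<in> img (j', S')" using pj qj by blast
      then have "S = S'" using memS p q pj qj by metis
      moreover have "card S = ?s * j" "card S' = ?s * j'" using p q pj qj unfolding B_def by auto
      ultimately have "j = j'" using r5 by simp
      then show False using pq pj qj \<open>S = S'\<close> by simp
    qed
  qed
  have fimg: "\<forall>p\<in>Sigma {..n} B. finite (img p)" using per by auto
  have cardU: "card (famset r (insert f I) W) = (\<Sum>p\<in>Sigma {..n} B. card (img p))"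
    unfolding eqset by (rule card_UN_disjoint[OF fP fimg disj])
  have finU: "finite (famset r (insert f I) W)" unfolding eqset by (rule finite_UN_I[OF fP]) (use fimg in blast)
  have "card (famset r (insert f I) W) * fact ?s ^ n = (\<Sum>p\<in>Sigma {..n} B. card (img p) * fact ?s ^ n)"
    unfolding cardU by (simp add: sum_distrib_right)
  also have "\<dots> = (\<Sum>p\<in>Sigma {..n} B. (case p of (j, S) \<Rightarrow> fact (?s * j) * FF m 1 j * (fact (?s * (n - j)) * FF m (card I) (n - j))))"
    by (rule sum.cong) (use per in auto)
  also have "\<dots> = (\<Sum>j\<le>n. \<Sum>S\<in>B j. fact (?s * j) * FF m 1 j * (fact (?s * (n - j)) * FF m (card I) (n - j)))"
    by (subst sum.Sigma[symmetric]) (use fW in \<open>auto simp: B_def\<close>)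
  also have "\<dots> = (\<Sum>j\<le>n. card (B j) * (fact (?s * j) * FF m 1 j * (fact (?s * (n - j)) * FF m (card I) (n - j))))"
    by simp
  also have "\<dots> = (\<Sum>j\<le>n. fact (?s * n) * (FF m 1 j * FF m (card I) (n - j)))"
  proof (rule sum.cong)
    fix j assume j: "j \<in> {..n}"
    have cB: "card (B j) = (?s * n) choose (?s * j)" unfolding B_def using n_subsets[OF fW] insert.prems(3) by simp
    have le: "?s * j \<le> ?s * n" using j by simp
    have bf: "fact (?s * j) * fact (?s * n - ?s * j) * ((?s * n) choose (?s * j)) = (fact (?s * n) :: nat)"
      by (rule binomial_fact_lemma[OF le])
    have sd: "?s * (n - j) = ?s * n - ?s * j" by (simp add: diff_mult_distrib2)
    have bf2: "card (B j) * fact (?s * j) * fact (?s * (n - j)) = (fact (?s * n) :: nat)"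
      unfolding cB sd using bf by (simp only: ac_simps)
    have "card (B j) * (fact (?s * j) * FF m 1 j * (fact (?s * (n - j)) * FF m (card I) (n - j)))
        = (card (B j) * fact (?s * j) * fact (?s * (n - j))) * (FF m 1 j * FF m (card I) (n - j))"
      by (simp only: ac_simps)
    then show "card (B j) * (fact (?s * j) * FF m 1 j * (fact (?s * (n - j)) * FF m (card I) (n - j)))
        = fact (?s * n) * (FF m 1 j * FF m (card I) (n - j))"
      unfolding bf2 .
  qed simp
  also have "\<dots> = fact (?s * n) * FF m (1 + card I) n"
    using FF_conv[of m 1 "card I" n] by (simp add: sum_distrib_left[symmetric])
  finally show ?case using finU insert.hyps by simp
qed

end

context
  fixes r :: nat
  assumes r5: "5 \<le> r"
begin

lemma fam_props:
  assumes H: "finite H" "card H = r" "e \<in> clique_edges H" "H \<subseteq> V" "finite V"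
    and cV: "card V = (r - 2) * k + 2"
    and Tb: "Tb \<in> famset r (clique_edges H - {e}) (V - H)"
  shows "dec r e H Tb" "twg r e (\<Union>g\<in>clique_edges H - {e}. Tb g) k" "\<Union>(\<Union>g\<in>clique_edges H - {e}. Tb g) = V"
proof -
  let ?I = "clique_edges H - {e}"
  note F = famsetD[OF Tb]
  have fI: "finite ?I" using ce_finite[OF H(1)] by blast
  obtain kb where kb: "\<forall>g\<in>?I. twg r g (Tb g) (kb g) \<and> card (\<Union>(Tb g)) = (r - 2) * kb g + 2"
    using F(2) by metis
  have gp: "\<Union>(Tb g) \<inter> H = g \<and> finite (\<Union>(Tb g)) \<and> (\<forall>h\<in>Tb g. card h = 2) \<and> conn g (Tb g)
      \<and> (\<Union>(Tb g) = g \<longrightarrow> Tb g = {g}) \<and> g \<subseteq> \<Union>(Tb g) \<and> card g = 2" if g: "g \<in> ?I" for g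
  proof -
    have tw: "twg r g (Tb g) (kb g)" and c: "card (\<Union>(Tb g)) = (r - 2) * kb g + 2" using kb g by auto
    have b: "finite (\<Union>(Tb g))" "\<forall>h\<in>Tb g. card h = 2" "g \<subseteq> \<Union>(Tb g)" "card g = 2"
      using twg_basic[OF r5 tw] by blast+
    have gH: "g \<subseteq> H" using g by (simp add: ce_iff)
    have "\<Union>(Tb g) \<inter> H = g" using F(3)[OF g] b(3) gH by blast
    moreover have "conn g (Tb g)" using tight_conn[OF r5 tw] c by blast
    moreover have "\<Union>(Tb g) = g \<longrightarrow> Tb g = {g}" using tight0[OF r5 tw c] by blast
    ultimately show ?thesis using b by blast
  qed
  have dj: "\<forall>g\<in>?I. \<forall>g'\<in>?I. g \<noteq> g' \<longrightarrow> \<Union>(Tb g) \<inter> \<Union>(Tb g') \<subseteq> H"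
  proof (intro ballI impI)
    fix g g' assume g: "g \<in> ?I" "g' \<in> ?I" "g \<noteq> g'"
    have "g \<subseteq> H" "g' \<subseteq> H" using g by (auto simp: ce_iff)
    then show "\<Union>(Tb g) \<inter> \<Union>(Tb g') \<subseteq> H" using F(4)[OF g] by blast
  qed
  show "dec r e H Tb" unfolding dec_def
  proof (intro conjI)
    show "finite H" "card H = r" "e \<in> clique_edges H" by (rule H(1), rule H(2), rule H(3))
    show "\<forall>g\<in>?I. \<Union>(Tb g) \<inter> H = g \<and> finite (\<Union>(Tb g)) \<and> (\<forall>h\<in>Tb g. card h = 2)
        \<and> conn g (Tb g) \<and> (\<Union>(Tb g) = g \<longrightarrow> Tb g = {g})" using gp by blast
    show "\<forall>g\<in>?I. \<forall>g'\<in>?I. g \<noteq> g' \<longrightarrow> \<Union>(Tb g) \<inter> \<Union>(Tb g') \<subseteq> H" by (rule dj)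
  qed
  have cd: "card (\<Union>(Tb g) - g) = (r - 2) * kb g" if g: "g \<in> ?I" for g
    using cdiff[of "\<Union>(Tb g)" g] gp[OF g] kb g by simp
  have "card (V - H) = (\<Sum>g\<in>?I. card (\<Union>(Tb g) - g))"
    unfolding F(5)[symmetric]
  proof (rule card_UN_disjoint[OF fI])
    show "\<forall>i\<in>?I. finite (\<Union>(Tb i) - i)" using gp by blast
    show "\<forall>i\<in>?I. \<forall>j\<in>?I. i \<noteq> j \<longrightarrow> (\<Union>(Tb i) - i) \<inter> (\<Union>(Tb j) - j) = {}" using F(4) by blast
  qed
  also have "\<dots> = (r - 2) * sum kb ?I" using cd by (simp add: sum_distrib_left)
  finally have s1: "card (V - H) = (r - 2) * sum kb ?I" .
  have "card (V - H) = card V - card H" using cdiff[OF H(5) H(4)] .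
  then have "card (V - H) = (r - 2) * (k - 1)" using cV H(2) r5 by (cases k) (auto simp: algebra_simps)
  then have "(r - 2) * sum kb ?I = (r - 2) * (k - 1)" using s1 by simp
  then have sk: "sum kb ?I = k - 1" using r5 by simp
  have k1: "k \<ge> 1"
  proof (rule ccontr)
    assume "\<not> k \<ge> 1"
    then have "card V = 2" using cV by simp
    then have "card H \<le> 2" using card_mono[OF H(5) H(4)] by simp
    then show False using H(2) r5 by simp
  qed
  have tw: "twg r e (\<Union>g\<in>?I. Tb g) (1 + sum kb ?I)"
  proof (rule twg.step[OF H(1,2,3)])
    show "\<forall>f\<in>?I. twg r f (Tb f) (kb f)" using kb by blast
    show "\<forall>f\<in>?I. \<forall>f'\<in>?I. f \<noteq> f' \<longrightarrow> \<Union>(Tb f) \<inter> \<Union>(Tb f') \<subseteq> H" by (rule dj)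
  qed
  then show "twg r e (\<Union>g\<in>?I. Tb g) k" using sk k1 by simp
  show "\<Union>(\<Union>g\<in>?I. Tb g) = V"
  proof
    show "\<Union>(\<Union>g\<in>?I. Tb g) \<subseteq> V"
    proof
      fix x assume "x \<in> \<Union>(\<Union>g\<in>?I. Tb g)"
      then obtain g where g: "g \<in> ?I" "x \<in> \<Union>(Tb g)" by blast
      have "g \<subseteq> H" using g(1) by (simp add: ce_iff)
      then show "x \<in> V" using F(3)[OF g(1)] g(2) H(4) by blast
    qed
    have "H \<subseteq> \<Union>(\<Union>g\<in>?I. Tb g)" using H_sub_U[OF r5 H(1,2,3)] gp by blast
    moreover have "V - H \<subseteq> \<Union>(\<Union>g\<in>?I. Tb g)" using F(5) by blast
    ultimately show "V \<subseteq> \<Union>(\<Union>g\<in>?I. Tb g)" by blast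
  qed
qed

lemma twg_to_fam:
  assumes tw: "twg r e T k" and UV: "\<Union>T = V" and cV: "card V = (r - 2) * k + 2" and k1: "k \<ge> 1"
  shows "\<exists>H Tb. e \<subseteq> H \<and> H \<subseteq> V \<and> card H = r \<and> Tb \<in> famset r (clique_edges H - {e}) (V - H)
      \<and> T = (\<Union>g\<in>clique_edges H - {e}. Tb g)"
proof -
  have tt: "card (\<Union>T) = (r - 2) * k + 2" using cV UV by simp
  obtain H Tb kb where D: "dec r e H Tb" and T: "T = (\<Union>g\<in>clique_edges H - {e}. Tb g)"
    and kk: "\<forall>g\<in>clique_edges H - {e}. twg r g (Tb g) (kb g) \<and> card (\<Union>(Tb g)) = (r - 2) * kb g + 2"
    using tight_dec[OF r5 tw tt k1] by blast
  let ?I = "clique_edges H - {e}"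
  define Tb0 where "Tb0 = (\<lambda>g. if g \<in> ?I then Tb g else {})"
  have T0: "T = (\<Union>g\<in>?I. Tb0 g)" unfolding T Tb0_def by (rule SUP_cong) auto
  have HV: "H \<subseteq> V" using D_HU[OF r5 D] T UV by simp
  have UV': "\<Union>(Tb g) \<subseteq> V" if "g \<in> ?I" for g using that T UV by blast
  have "Tb0 \<in> famset r ?I (V - H)"
  proof (rule famsetI)
    fix g assume "g \<notin> ?I" then show "Tb0 g = {}" unfolding Tb0_def by auto
  next
    fix g assume g: "g \<in> ?I"
    show "\<exists>j. twg r g (Tb0 g) j \<and> card (\<Union>(Tb0 g)) = (r - 2) * j + 2" using kk g unfolding Tb0_def by auto
    show "\<Union>(Tb0 g) \<subseteq> g \<union> (V - H)" using UV'[OF g] D_g(1)[OF r5 D g] g unfolding Tb0_def by auto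
  next
    fix g g' assume g: "g \<in> ?I" "g' \<in> ?I" "g \<noteq> g'"
    show "(\<Union>(Tb0 g) - g) \<inter> (\<Union>(Tb0 g') - g') = {}"
      using D_dj[OF r5 D g] D_g(10)[OF r5 D g(1)] D_g(10)[OF r5 D g(2)] g unfolding Tb0_def by auto
  next
    have "(\<Union>g\<in>?I. \<Union>(Tb0 g) - g) = (\<Union>g\<in>?I. \<Union>(Tb g) - H)"
    proof (rule SUP_cong)
      fix g assume g: "g \<in> ?I" then show "\<Union>(Tb0 g) - g = \<Union>(Tb g) - H" using D_g(10)[OF r5 D g] unfolding Tb0_def by simp
    qed simp
    also have "\<dots> = \<Union>T - H" unfolding T by blast
    finally show "(\<Union>g\<in>?I. \<Union>(Tb0 g) - g) = V - H" using UV by simp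
  qed
  then show ?thesis using D_H[OF r5 D] HV T0 by blast
qed

lemma step_count:
  fixes e V :: "'a set"
  assumes e: "card e = 2" "e \<subseteq> V" and fV: "finite V" and cV: "card V = (r - 2) * k + 2" and k1: "k \<ge> 1"
    and CHk: "CH r ((r choose 2) - 1) (k - 1) TYPE('a)"
  shows "card {T. twg r e T k \<and> \<Union>T = V} * fact (r - 2) ^ k = fact ((r - 2) * k) * FF ((r choose 2) - 1) 1 k"
proof -
  let ?m = "(r choose 2) - 1"
  let ?s = "r - 2"
  define Hs where "Hs = {H. e \<subseteq> H \<and> H \<subseteq> V \<and> card H = r}"
  define Phi where "Phi = (\<lambda>H (Tb :: 'a set \<Rightarrow> 'a set set). \<Union>g\<in>clique_edges H - {e}. Tb g)"
  define Fm where "Fm = (\<lambda>H. famset r (clique_edges H - {e}) (V - H))"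
  have Hs_props: "finite H \<and> card H = r \<and> e \<in> clique_edges H \<and> H \<subseteq> V" if "H \<in> Hs" for H
    using that e(1) finite_subset[OF _ fV] unfolding Hs_def by (auto simp: ce_iff)
  have seteq: "{T. twg r e T k \<and> \<Union>T = V} = (\<Union>H\<in>Hs. Phi H ` Fm H)"
  proof (intro equalityI subsetI)
    fix T assume "T \<in> {T. twg r e T k \<and> \<Union>T = V}"
    then have T: "twg r e T k" "\<Union>T = V" by auto
    obtain H Tb where "e \<subseteq> H" "H \<subseteq> V" "card H = r" "Tb \<in> Fm H" "T = Phi H Tb"
      using twg_to_fam[OF T cV k1] unfolding Fm_def Phi_def by blast
    then show "T \<in> (\<Union>H\<in>Hs. Phi H ` Fm H)" unfolding Hs_def by blast
  next
    fix T assume "T \<in> (\<Union>H\<in>Hs. Phi H ` Fm H)"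
    then obtain H Tb where H: "H \<in> Hs" and Tb: "Tb \<in> Fm H" and TP: "T = Phi H Tb" by blast
    have hp: "finite H" "card H = r" "e \<in> clique_edges H" "H \<subseteq> V" using Hs_props[OF H] by auto
    have Tb': "Tb \<in> famset r (clique_edges H - {e}) (V - H)" using Tb unfolding Fm_def .
    show "T \<in> {T. twg r e T k \<and> \<Union>T = V}"
      using fam_props(2,3)[OF hp fV cV Tb'] TP unfolding Phi_def by simp
  qed
  have decF: "dec r e H Tb" if "H \<in> Hs" "Tb \<in> Fm H" for H Tb
  proof -
    have hp: "finite H" "card H = r" "e \<in> clique_edges H" "H \<subseteq> V" using Hs_props[OF that(1)] by auto
    show ?thesis using fam_props(1)[OF hp fV cV] that(2) unfolding Fm_def by blast
  qed
  have uniq: "H1 = H2 \<and> Tb1 = Tb2" if "H1 \<in> Hs" "Tb1 \<in> Fm H1" "H2 \<in> Hs" "Tb2 \<in> Fm H2" "Phi H1 Tb1 = Phi H2 Tb2"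
    for H1 H2 Tb1 Tb2
  proof -
    have u: "H1 = H2 \<and> (\<forall>g\<in>clique_edges H1 - {e}. Tb1 g = Tb2 g)"
      using dec_unique[OF r5 decF[OF that(1,2)] decF[OF that(3,4)]] that(5) unfolding Phi_def by blast
    have "Tb1 g = Tb2 g" for g
    proof (cases "g \<in> clique_edges H1 - {e}")
      case True then show ?thesis using u by blast
    next
      case False
      then show ?thesis using famsetD(1)[OF that(2)[unfolded Fm_def] False] famsetD(1)[OF that(4)[unfolded Fm_def]] u by auto
    qed
    then show ?thesis using u by blast
  qed
  have fHs: "finite Hs"
  proof (rule finite_subset)
    show "Hs \<subseteq> Pow V" unfolding Hs_def by blast
    show "finite (Pow V)" using fV by simp
  qed
  have fc: "finite (Fm H) \<and> card (Fm H) * fact ?s ^ (k - 1) = fact (?s * (k - 1)) * FF ?m ?m (k - 1)" if H: "H \<in> Hs" for H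
  proof -
    have hp: "finite H" "card H = r" "e \<in> clique_edges H" "H \<subseteq> V" using Hs_props[OF H] by auto
    have fI: "finite (clique_edges H - {e})" using ce_finite[OF hp(1)] by blast
    have cI: "card (clique_edges H - {e}) = ?m"
    proof -
      have "card (clique_edges H) = r choose 2" unfolding clique_edges_def using n_subsets[OF hp(1)] hp(2) by simp
      then show ?thesis using hp(3) ce_finite[OF hp(1)] by simp
    qed
    have cVH: "card (V - H) = ?s * (k - 1)"
    proof -
      have "card (V - H) = card V - card H" using cdiff[OF fV hp(4)] .
      then show ?thesis using cV hp(2) r5 k1 by (cases k) (auto simp: algebra_simps)
    qed
    have pr: "\<forall>g\<in>clique_edges H - {e}. card g = 2 \<and> g \<inter> (V - H) = {}" by (auto simp: ce_iff)
    show ?thesis using fam_count[OF r5 fI pr _ cVH CHk] fV cI unfolding Fm_def by simp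
  qed
  have inj: "inj_on (Phi H) (Fm H)" if "H \<in> Hs" for H
    using uniq that by (intro inj_onI) blast
  have disj: "\<forall>H1\<in>Hs. \<forall>H2\<in>Hs. H1 \<noteq> H2 \<longrightarrow> Phi H1 ` Fm H1 \<inter> Phi H2 ` Fm H2 = {}"
    using uniq by blast
  have fim: "\<forall>H\<in>Hs. finite (Phi H ` Fm H)" using fc by blast
  have cardS: "card {T. twg r e T k \<and> \<Union>T = V} = (\<Sum>H\<in>Hs. card (Fm H))"
    unfolding seteq using card_UN_disjoint[OF fHs fim disj] card_image[OF inj] by simp
  have cHs: "card Hs = (?s * k) choose ?s"
  proof -
    have ij: "inj_on (\<lambda>H. H - e) Hs" unfolding Hs_def by (rule inj_onI) blast
    have im: "(\<lambda>H. H - e) ` Hs = {S. S \<subseteq> V - e \<and> card S = ?s}"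
    proof (intro equalityI subsetI)
      fix S assume "S \<in> (\<lambda>H. H - e) ` Hs"
      then obtain H where H: "H \<in> Hs" "S = H - e" by blast
      have "card S = card H - card e" using H cdiff[of H e] Hs_props[OF H(1)] unfolding Hs_def by auto
      then show "S \<in> {S. S \<subseteq> V - e \<and> card S = ?s}" using H Hs_props[OF H(1)] e(1) by auto
    next
      fix S assume S: "S \<in> {S. S \<subseteq> V - e \<and> card S = ?s}"
      have fe: "finite e" using e(1) by (metis card.infinite zero_neq_numeral)
      have fS: "finite S" using S finite_subset[of S V] fV by auto
      have "card (S \<union> e) = ?s + 2" using card_Un_disjoint[OF fS fe] S e(1) by auto
      then have "S \<union> e \<in> Hs" unfolding Hs_def using S e(2) r5 by auto
      moreover have "S = (S \<union> e) - e" using S by blast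
      ultimately show "S \<in> (\<lambda>H. H - e) ` Hs" by blast
    qed
    have "card (V - e) = ?s * k" using cdiff[OF fV e(2)] cV e(1) by simp
    then show ?thesis using card_image[OF ij] im n_subsets[of "V - e" ?s] fV by simp
  qed
  have kk: "k = Suc (k - 1)" using k1 by simp
  have sk1: "?s * (k - 1) = ?s * k - ?s" by (simp add: diff_mult_distrib2)
  have "card {T. twg r e T k \<and> \<Union>T = V} * fact ?s ^ k = (\<Sum>H\<in>Hs. card (Fm H) * fact ?s ^ (k - 1)) * fact ?s"
    unfolding cardS by (subst kk) (simp add: sum_distrib_right ac_simps)
  also have "\<dots> = card Hs * fact (?s * (k - 1)) * FF ?m ?m (k - 1) * fact ?s"
    using fc by simp
  also have "\<dots> = (fact ?s * fact (?s * k - ?s) * ((?s * k) choose ?s)) * FF ?m ?m (k - 1)"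
    unfolding cHs sk1 by (simp only: ac_simps)
  also have "\<dots> = fact (?s * k) * FF ?m ?m (k - 1)"
    using binomial_fact_lemma[of ?s "?s * k"] k1 by simp
  also have "FF ?m ?m (k - 1) = FF ?m 1 k" by (subst kk) simp
  finally show ?thesis .
qed

end

lemma FF_fc: "m \<ge> 1 \<Longrightarrow> real (FF m 1 k) = fuss_catalan (m - 1) k"
proof -
  assume m: "m \<ge> 1"
  then obtain m' where m': "m = Suc m'" by (cases m) auto
  have a: "FF m 1 k * (m * k + 1) = (m * k + 1) choose k" using FF_closed[OF m order_refl, of k] by (simp only: mult_1)
  have b: "(m * k + 1 - k) * ((m * k + 1) choose k) = (m * k + 1) * ((m * k) choose k)"
    using binomial_absorb_comp[of "m * k + 1" k] by simp
  have "(m * k + 1) * (FF m 1 k * (m * k + 1 - k)) = (FF m 1 k * (m * k + 1)) * (m * k + 1 - k)"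
    by (simp only: ac_simps)
  also have "\<dots> = (m * k + 1 - k) * ((m * k + 1) choose k)" unfolding a by (simp only: ac_simps)
  also have "\<dots> = (m * k + 1) * ((m * k) choose k)" by (rule b)
  finally have eq: "(m * k + 1) * (FF m 1 k * (m * k + 1 - k)) = (m * k + 1) * ((m * k) choose k)" .
  have ne: "m * k + 1 \<noteq> 0" by simp
  have c: "FF m 1 k * (m * k + 1 - k) = (m * k) choose k" using eq by (simp only: mult_left_cancel[OF ne])
  have d: "m * k + 1 - k = m' * k + 1" unfolding m' by simp
  have c2: "FF m 1 k * (m' * k + 1) = (m * k) choose k" using c unfolding d .
  have "real (FF m 1 k) * real (m' * k + 1) = real ((m * k) choose k)"
    using arg_cong[OF c2, of real] by (simp only: of_nat_mult)
  moreover have "real (m' * k + 1) > 0" by (simp only: of_nat_0_less_iff)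
  ultimately have f: "real (FF m 1 k) = real ((m * k) choose k) / real (m' * k + 1)"
    by (simp add: eq_divide_eq)
  have "fuss_catalan (m - 1) k = (1 / real (m' * k + 1)) * real ((m * k) choose k)"
    unfolding fuss_catalan_def m' by simp
  then show ?thesis using f by simp
qed

context
  fixes r :: nat
  assumes r5: "5 \<le> r"
begin

lemma zero_count:
  assumes "card e = 2" "e \<subseteq> V" "finite V" "card V = 2"
  shows "card {T. twg r e T 0 \<and> \<Union>T = V} = 1"
proof -
  have Ve: "e = V" using card_subset_eq[OF assms(3) assms(2)] assms by simp
  have "{T. twg r e T 0 \<and> \<Union>T = V} = {{e}}"
  proof (intro equalityI subsetI)
    fix T assume "T \<in> {T. twg r e T 0 \<and> \<Union>T = V}"
    then show "T \<in> {{e}}" using twg0 by blast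
  next
    fix T assume "T \<in> {{e}}"
    then show "T \<in> {T. twg r e T 0 \<and> \<Union>T = V}" using twg.base[OF assms(1), of r] Ve by simp
  qed
  then show ?thesis by simp
qed

lemma CH_all: "CH r ((r choose 2) - 1) k TYPE('a)"
proof (induction k)
  case 0
  show ?case unfolding CH_def
  proof (intro allI impI)
    fix j and f U :: "'a set"
    assume "j \<le> 0" "card f = 2" "f \<subseteq> U" "finite U" "card U = (r - 2) * j + 2"
    then show "card {T. twg r f T j \<and> \<Union>T = U} * fact (r - 2) ^ j = fact ((r - 2) * j) * FF ((r choose 2) - 1) 1 j"
      using zero_count[of f U] by simp
  qed
next
  case (Suc k)
  show ?case unfolding CH_def
  proof (intro allI impI)
    fix j and f U :: "'a set"
    assume j: "j \<le> Suc k" "card f = 2" "f \<subseteq> U" "finite U" "card U = (r - 2) * j + 2"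
    show "card {T. twg r f T j \<and> \<Union>T = U} * fact (r - 2) ^ j = fact ((r - 2) * j) * FF ((r choose 2) - 1) 1 j"
    proof (cases "j \<le> k")
      case True then show ?thesis using Suc.IH j unfolding CH_def by blast
    next
      case False
      then have jk: "j = Suc k" using j(1) by simp
      have "CH r ((r choose 2) - 1) (j - 1) TYPE('a)" using Suc.IH jk by simp
      then show ?thesis using step_count[OF r5 j(2,3,4,5)] jk by simp
    qed
  qed
qed

end

theorem lemma3p8:
  fixes r k :: nat and e V :: "'a set"
  assumes "r \<ge> 5"
    and "finite V" and "card V = (r - 2) * k + 2"
    and "card e = 2" and "e \<subseteq> V"
  shows "real (card {T. twg r e T k \<and> \<Union>T = V})
         = fact ((r - 2) * k) / (fact (r - 2)) ^ k * fuss_catalan ((r choose 2) - 2) k"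
proof -
  have nat_eq: "card {T. twg r e T k \<and> \<Union>T = V} * fact (r - 2) ^ k = fact ((r - 2) * k) * FF ((r choose 2) - 1) 1 k"
    using CH_use[OF assms(1) CH_all[OF assms(1), of k] order_refl assms(4,5,2,3)] .
  have c2: "(r choose 2) = r * (r - 1) div 2" by (rule choose_two)
  have "r * (r - 1) \<ge> 5 * 4" using assms(1) by (intro mult_mono) auto
  then have c3: "(r choose 2) \<ge> 10" unfolding c2 by linarith
  have m1: "(r choose 2) - 1 \<ge> 1" using c3 by simp
  have dm: "(r choose 2) - 1 - 1 = (r choose 2) - 2" by simp
  have fc: "fuss_catalan ((r choose 2) - 2) k = real (FF ((r choose 2) - 1) 1 k)"
    using FF_fc[OF m1, of k] unfolding dm by simp
  have "real (card {T. twg r e T k \<and> \<Union>T = V}) * fact (r - 2) ^ k = fact ((r - 2) * k) * real (FF ((r choose 2) - 1) 1 k)"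
    using arg_cong[OF nat_eq, of real] by (simp add: of_nat_fact)
  moreover have "(fact (r - 2) :: real) ^ k > 0" by simp
  ultimately show ?thesis unfolding fc by (simp add: field_simps)
qed

end
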